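(* Consider the online firefighter game on the infinite square grid $\mathbb{L}_2=\mathbb{Z}\times\mathbb{Z}$ (described in the context). There is an online strategy for Player 1 that wins against every firefighter sequence $(f_i)_{i\geq 1}$ revealed by Player 2 which satisfies both: (i) there exists $N\geq 1$ with $\sum_{i=1}^N f_i\geq 4N$; and (ii) there exists an index $M\geq 1$ such that $f_i\geq 1$ for all $i\geq M$ and $f_i=0$ for all $i<M$.
   Context: The grid $\mathbb{L}_2$ has vertex set $\mathbb{Z}\times\mathbb{Z}$, with $(x,y)$ adjacent to $(x',y')$ iff $|x-x'|+|y-y'|=1$. A fire starts at an ignition vertex $v$ at time $0$ (so $v$ is burning). A firefighter sequence is a sequence $(f_i)_{i\geq 1}$ of non-negative integers. At each turn $i\geq 1$: Player 1 chooses at most $f_i$ vertices that are neither burning nor protected and protects them; then the fire spreads from every burning vertex to all of its unprotected neighbours. Once a vertex is burning or protected it remains so forever; unused firefighters are not carried over. Player 2 wins if at every turn some new vertex starts burning; otherwise Player 1 wins (the fire is contained). In the online version the sequence is chosen by Player 2 and revealed turn by turn: at turn $i$ Player 2 reveals $f_i$ to Player 1 just before Player 1 places firefighters, so an online strategy of Player 1 chooses its moves at turn $i$ based only on $f_1,\dots,f_i$ and the history of the game so far (in particular without knowing $M$ or $N$ in advance). *)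

theory Defs
  imports Main
begin

type_synonym vertex = "int \<times> int"

definition grid_adj :: "vertex \<Rightarrow> vertex \<Rightarrow> bool" where
  "grid_adj p q \<longleftrightarrow> \<bar>fst p - fst q\<bar> + \<bar>snd p - snd q\<bar> = 1"

text \<open>A firefighter sequence is f :: nat => nat, with f i the number of firefighters
  at turn i >= 1 (f 0 is irrelevant).  The values revealed up to turn n are
  the list [f 1, ..., f n].\<close>
definition revealed :: "(nat \<Rightarrow> nat) \<Rightarrow> nat \<Rightarrow> nat list" where
  "revealed f n = map f [1..<Suc n]"

text \<open>An online strategy maps the list of revealed values [f 1,...,f i] to the set of
  vertices protected at turn i.  Since the game is deterministic, the history of the
  game up to turn i is a function of f 1,...,f (i-1) and the strategy, so this
  captures exactly the strategies using only f 1..f i and the history.\<close>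
type_synonym strategy = "nat list \<Rightarrow> vertex set"

fun game_state :: "vertex \<Rightarrow> strategy \<Rightarrow> (nat \<Rightarrow> nat) \<Rightarrow> nat \<Rightarrow> vertex set \<times> vertex set" where
  "game_state v \<sigma> f 0 = ({v}, {})"
| "game_state v \<sigma> f (Suc i) =
     (let (B, P) = game_state v \<sigma> f i;
          P' = P \<union> \<sigma> (revealed f (Suc i))
      in (B \<union> {w. w \<notin> P' \<and> (\<exists>u\<in>B. grid_adj u w)}, P'))"

definition legal_move :: "vertex \<Rightarrow> strategy \<Rightarrow> (nat \<Rightarrow> nat) \<Rightarrow> nat \<Rightarrow> bool" where
  "legal_move v \<sigma> f n \<longleftrightarrow>
     (let (B, P) = game_state v \<sigma> f (n - 1); S = \<sigma> (revealed f n)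
      in finite S \<and> card S \<le> f n \<and> S \<inter> (B \<union> P) = {})"

definition player1_wins :: "vertex \<Rightarrow> strategy \<Rightarrow> (nat \<Rightarrow> nat) \<Rightarrow> bool" where
  "player1_wins v \<sigma> f \<longleftrightarrow>
     (\<exists>n\<ge>1. (\<forall>k\<in>{1..n}. legal_move v \<sigma> f k) \<and>
            fst (game_state v \<sigma> f n) = fst (game_state v \<sigma> f (n - 1)))"

end

theory Submission
  imports Defs
begin

record vs =
  tW :: "int \<Rightarrow> int"
  nN :: bool
  tN :: "int \<Rightarrow> int"
  nS :: bool
  tS :: "int \<Rightarrow> int"
  uU :: int
  xU :: int
  uL :: int
  xL :: int

definition rfl :: "vs \<Rightarrow> vs" where
"rfl v = \<lparr>tW = (\<lambda>y. tW v (-y)), nN = nS v, tN = tS v, nS = nN v, tS = tN v,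
          uU = uL v, xU = xL v, uL = uU v, xL = xU v\<rparr>"

lemma rfl_simps[simp]: "tW (rfl v) y = tW v (-y)" "nN (rfl v) = nS v" "tN (rfl v) = tS v"
  "nS (rfl v) = nN v" "tS (rfl v) = tN v" "uU (rfl v) = uL v" "xU (rfl v) = xL v"
  "uL (rfl v) = uU v" "xL (rfl v) = xU v"
  by (simp_all add: rfl_def)

lemma rfl_rfl[simp]: "rfl (rfl v) = v"
  by (simp add: rfl_def)

fun inE :: "vs \<Rightarrow> int \<times> int \<Rightarrow> bool" where
"inE v (x,y) \<longleftrightarrow> (x < 0 \<and> -x + \<bar>y\<bar> \<ge> tW v y) \<or> (nN v \<and> x \<ge> 0 \<and> y > 0 \<and> x + y \<ge> tN v x)
   \<or> (nS v \<and> x \<ge> 0 \<and> y < 0 \<and> x - y \<ge> tS v x)"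

definition capW :: "vs \<Rightarrow> int \<Rightarrow> bool" where
"capW v y \<longleftrightarrow> (nN v \<and> y \<ge> tN v 0) \<or> (nS v \<and> y \<le> - tS v 0)"

fun wallNC :: "vs \<Rightarrow> int \<times> int \<Rightarrow> bool" where
"wallNC v (x,y) \<longleftrightarrow> (x < 0 \<and> -x + \<bar>y\<bar> = tW v y \<and> \<not> capW v y) \<or> (nN v \<and> x \<ge> 0 \<and> y > 0 \<and> x + y = tN v x)
   \<or> (nS v \<and> x \<ge> 0 \<and> y < 0 \<and> x - y = tS v x)"

fun rp :: "int \<times> int \<Rightarrow> int \<times> int" where "rp (x,y) = (x, -y)"

lemma rp_rp[simp]: "rp (rp p) = p" by (cases p) simp

lemma inE_rfl: "inE (rfl v) p = inE v (rp p)"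
  by (cases p) auto

lemma capW_rfl: "capW (rfl v) y = capW v (-y)"
  by (auto simp: capW_def)

lemma wallNC_rfl: "wallNC (rfl v) p = wallNC v (rp p)"
  by (cases p) (auto simp: capW_rfl)

definition validH :: "vs \<Rightarrow> bool" where
"validH v \<longleftrightarrow> (\<forall>y\<ge>0. tW v y \<ge> y + 1 \<and> tW v y \<le> tW v (y+1) \<and> tW v (y+1) \<le> tW v y + 2) \<and>
  (nN v \<longrightarrow> (\<forall>x\<ge>0. tN v x \<ge> x + 1 \<and> tN v x \<le> tN v (x+1) \<and> tN v (x+1) \<le> tN v x + 2)
     \<and> (\<forall>y \<ge> tN v 0 - 1. tW v y = y + 1))"

definition valid :: "vs \<Rightarrow> bool" where
"valid v \<longleftrightarrow> validH v \<and> validH (rfl v)"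

lemma valid_rfl: "valid (rfl v) = valid v"
  by (auto simp: valid_def)

lemma validH_mono: assumes "validH v" "0 \<le> a" "a \<le> b" shows "tW v a \<le> tW v b"
  using assms(3)
proof (induction b rule: int_ge_induct)
  case base then show ?case by simp
next
  case (step i)
  have "tW v i \<le> tW v (i+1)" using assms(1,2) step(1) unfolding validH_def by auto
  then show ?case using step by simp
qed

lemma validH_monoN: assumes "validH v" "nN v" "0 \<le> a" "a \<le> b" shows "tN v a \<le> tN v b"
  using assms(4)
proof (induction b rule: int_ge_induct)
  case base then show ?case by simp
next
  case (step i)
  have "tN v i \<le> tN v (i+1)" using assms(1,2,3) step(1) unfolding validH_def by auto
  then show ?case using step by simp
qed

definition adj :: "int \<times> int \<Rightarrow> int \<times> int \<Rightarrow> bool" where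
"adj p q \<longleftrightarrow> \<bar>fst p - fst q\<bar> + \<bar>snd p - snd q\<bar> = 1"

lemma adj_cases:
  assumes "adj (x,y) q"
  shows "q = (x+1,y) \<or> q = (x-1,y) \<or> q = (x,y+1) \<or> q = (x,y-1)"
  using assms unfolding adj_def by (cases q) (auto simp: abs_if split: if_splits)


lemma inE_W: "x < 0 \<Longrightarrow> -x + \<bar>y\<bar> \<ge> tW v y \<Longrightarrow> inE v (x,y)" by simp
lemma inE_N: "nN v \<Longrightarrow> x \<ge> 0 \<Longrightarrow> y > 0 \<Longrightarrow> x + y \<ge> tN v x \<Longrightarrow> inE v (x,y)" by simp

lemma inner_up:
  assumes v: "valid v" and E: "inE v (x,y)" and y: "y \<ge> 0" and nw: "\<not> wallNC v (x,y)"
  shows "inE v (x+1,y) \<and> inE v (x-1,y) \<and> inE v (x,y+1) \<and> inE v (x,y-1)"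
proof -
  have H: "validH v" and HL: "validH (rfl v)" using v by (auto simp: valid_def)
  have W1: "\<And>y. y \<ge> 0 \<Longrightarrow> tW v y \<ge> y + 1 \<and> tW v y \<le> tW v (y+1) \<and> tW v (y+1) \<le> tW v y + 2"
    using H unfolding validH_def by blast
  have W0: "tW v (-1) \<le> tW v 0 + 2"
  proof -
    have "tW (rfl v) (0+1) \<le> tW (rfl v) 0 + 2" using HL unfolding validH_def by blast
    then show ?thesis by simp
  qed
  show ?thesis
  proof (cases "x < 0")
    case True
    then have Ew: "-x + y \<ge> tW v y" using E y by auto
    show ?thesis
    proof (cases "-x + y = tW v y")
      case False
      then have gt: "-x + y \<ge> tW v y + 1" using Ew by simp
      have w: "tW v y \<ge> y + 1" "tW v (y+1) \<le> tW v y + 2" using W1[OF y] by auto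
      have a: "inE v (x+1,y)"
      proof (rule inE_W)
        show "x + 1 < 0" using gt w True by linarith
        show "-(x+1) + \<bar>y\<bar> \<ge> tW v y" using gt y by simp
      qed
      have b: "inE v (x-1,y)" by (rule inE_W) (use gt y True in auto)
      have c: "inE v (x,y+1)" by (rule inE_W) (use gt y True w in auto)
      have d: "inE v (x,y-1)"
      proof (cases "y = 0")
        case True
        then show ?thesis by (intro inE_W) (use gt W0 \<open>x < 0\<close> in auto)
      next
        case False
        then have "tW v (y-1) \<le> tW v y" using W1[of "y-1"] y by auto
        then show ?thesis by (intro inE_W) (use gt \<open>x<0\<close> False y in auto)
      qed
      show ?thesis using a b c d by blast
    next
      case eq: True
      then have cap: "capW v y" using nw True y by auto
      have nv: "nN v" and yc: "y \<ge> tN v 0"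
      proof -
        have "\<not> (nS v \<and> y \<le> - tS v 0)"
        proof
          assume a: "nS v \<and> y \<le> - tS v 0"
          have "tS v 0 \<ge> 0 + 1" using HL a unfolding validH_def by auto
          then show False using a y by simp
        qed
        then show "nN v" "y \<ge> tN v 0" using cap unfolding capW_def by auto
      qed
      have N1: "\<forall>x\<ge>0. tN v x \<ge> x + 1" and C: "\<forall>y \<ge> tN v 0 - 1. tW v y = y + 1"
        using H nv unfolding validH_def by auto
      have t0: "tN v 0 \<ge> 1" using N1 by auto
      have ty: "tW v y = y + 1" using C yc by auto
      then have x1: "x = -1" using eq by simp
      have c1: "tW v (y+1) = y + 2" "tW v (y - 1) = y" using C yc by auto
      have a: "inE v (x+1,y)" by (rule inE_N) (use nv x1 yc t0 in auto)
      have b: "inE v (x-1,y)" by (rule inE_W) (use x1 ty y in auto)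
      have c: "inE v (x,y+1)" by (rule inE_W) (use x1 c1 y in auto)
      have d: "inE v (x,y-1)" by (rule inE_W) (use x1 c1 y yc t0 in auto)
      show ?thesis using a b c d by blast
    qed
  next
    case False
    then have nv: "nN v" and yp: "y > 0" and Ge: "x + y \<ge> tN v x" using E y by auto
    have gt: "x + y > tN v x" using nw False nv yp Ge by auto
    have N: "\<And>x. x\<ge>0 \<Longrightarrow> tN v x \<ge> x + 1 \<and> tN v x \<le> tN v (x+1) \<and> tN v (x+1) \<le> tN v x + 2"
      and C: "\<forall>y \<ge> tN v 0 - 1. tW v y = y + 1"
      using H nv unfolding validH_def by auto
    have x0: "x \<ge> 0" using False by simp
    have n0: "tN v x \<ge> x + 1" "tN v (x+1) \<le> tN v x + 2" using N[OF x0] by auto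
    have a: "inE v (x+1,y)" by (rule inE_N) (use nv x0 yp gt n0 in auto)
    have c: "inE v (x,y+1)" by (rule inE_N) (use nv x0 yp gt in auto)
    have d: "inE v (x,y-1)" by (rule inE_N) (use nv x0 yp gt n0 in auto)
    have b: "inE v (x-1,y)"
    proof (cases "x = 0")
      case True
      have "tW v y = y + 1" using C gt True by auto
      then show ?thesis by (intro inE_W) (use True yp in auto)
    next
      case False
      then have "tN v (x-1) \<le> tN v x" using N[of "x-1"] x0 by auto
      then show ?thesis by (intro inE_N) (use nv False x0 yp gt in auto)
    qed
    show ?thesis using a b c d by blast
  qed
qed


lemma inner:
  assumes v: "valid v" and E: "inE v p" and a: "adj p q" and nq: "\<not> inE v q"
  shows "wallNC v p"
proof (rule ccontr)
  assume nw: "\<not> wallNC v p"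
  obtain x y where p: "p = (x,y)" by (cases p)
  have aq: "q = (x+1,y) \<or> q = (x-1,y) \<or> q = (x,y+1) \<or> q = (x,y-1)"
    using adj_cases a p by simp
  show False
  proof (cases "y \<ge> 0")
    case True
    have "inE v (x+1,y) \<and> inE v (x-1,y) \<and> inE v (x,y+1) \<and> inE v (x,y-1)"
      using inner_up[OF v _ True] E nw p by simp
    with aq nq show False by blast
  next
    case False
    have v': "valid (rfl v)" using v by (simp add: valid_rfl)
    have E': "inE (rfl v) (x,-y)" using E p by (simp add: inE_rfl del: inE.simps)
    have nw': "\<not> wallNC (rfl v) (x,-y)" using nw p by (simp add: wallNC_rfl del: wallNC.simps)
    have "inE (rfl v) (x+1,-y) \<and> inE (rfl v) (x-1,-y) \<and> inE (rfl v) (x,-y+1) \<and> inE (rfl v) (x,-y-1)"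
      using inner_up[OF v' E' _ nw'] False by simp
    then have "inE v (x+1,y) \<and> inE v (x-1,y) \<and> inE v (x,y-1) \<and> inE v (x,y+1)"
      by (simp add: inE_rfl add.commute del: inE.simps)
    with aq nq show False by blast
  qed
qed


section \<open>Shapes and updates\<close>

definition shU :: "int \<Rightarrow> vs \<Rightarrow> bool" where
"shU t v \<longleftrightarrow> (\<not> nN v \<longrightarrow> 1 \<le> uU v \<and> uU v \<le> t \<and> tW v (uU v - 1) \<le> t \<and> t \<le> tW v (uU v) \<and> tW v (uU v) \<le> t + 2
                 \<and> (\<forall>y \<ge> uU v. tW v y = tW v (uU v) + 2*(y - uU v)))
          \<and> (nN v \<longrightarrow> 1 \<le> xU v \<and> tN v 0 \<le> t \<and> tN v (xU v - 1) \<le> t \<and> t \<le> tN v (xU v) \<and> tN v (xU v) \<le> t + 2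
                 \<and> (\<forall>x \<ge> xU v. tN v x = tN v (xU v) + 2*(x - xU v)))"

definition strU :: "int \<Rightarrow> vs \<Rightarrow> bool" where
"strU t v \<longleftrightarrow> shU t v \<and> (\<not> nN v \<longrightarrow> tW v (uU v - 1) \<le> t - 1) \<and> (nN v \<longrightarrow> tN v (xU v - 1) \<le> t - 1 \<and> tN v 0 \<le> t - 1)"

definition capU :: "int \<Rightarrow> vs \<Rightarrow> int" where
"capU t v = (if nN v then t - xU v else (t - uU v) + t)"

definition dueU :: "int \<Rightarrow> vs \<Rightarrow> bool" where
"dueU t v \<longleftrightarrow> (if nN v then tN v (xU v) = t else tW v (uU v) = t)"

definition updU :: "int \<Rightarrow> int \<Rightarrow> vs \<Rightarrow> vs" where
"updU t m v = (if m \<le> 0 then v else if \<not> nN v then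
   (if m \<le> t - uU v then v\<lparr>tW := (\<lambda>y. if y < uU v then tW v y else if y < uU v + m then t else t + 2*(y - (uU v + m - 1))), uU := uU v + m\<rparr>
    else v\<lparr>tW := (\<lambda>y. if y < uU v then tW v y else if y \<le> t - 1 then t else y + 1), nN := True,
           tN := (\<lambda>x. if x < m - (t - uU v) then t else t + 2*(x - (m - (t - uU v) - 1))), xU := m - (t - uU v)\<rparr>)
 else v\<lparr>tN := (\<lambda>x. if x < xU v then tN v x else if x < xU v + m then t else t + 2*(x - (xU v + m - 1))), xU := xU v + m\<rparr>)"

definition eqU :: "vs \<Rightarrow> vs \<Rightarrow> bool" where
"eqU a b \<longleftrightarrow> (\<forall>y\<ge>0. tW a y = tW b y) \<and> nN a = nN b \<and> tN a = tN b \<and> uU a = uU b \<and> xU a = xU b"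

lemma eqU_validH: "eqU a b \<Longrightarrow> validH a = validH b"
  unfolding eqU_def validH_def by auto

lemma shU_uU: "shU t v \<Longrightarrow> \<not> nN v \<Longrightarrow> 1 \<le> uU v"
  unfolding shU_def by blast

lemma eqU_shU: assumes e: "eqU a b" shows "shU t a = shU t b"
proof -
  have 1: "nN a = nN b" "tN a = tN b" "uU a = uU b" "xU a = xU b" and 2: "\<And>y. y \<ge> 0 \<Longrightarrow> tW a y = tW b y"
    using e unfolding eqU_def by auto
  have "\<not> nN a \<Longrightarrow> 1 \<le> uU a \<Longrightarrow> tW a (uU a - 1) = tW b (uU b - 1) \<and> tW a (uU a) = tW b (uU b)
    \<and> (\<forall>y \<ge> uU a. tW a y = tW b y)" using 1 2 by auto
  then show ?thesis unfolding shU_def 1 by (smt (verit, best))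
qed

lemma eqU_strU: assumes e: "eqU a b" shows "strU t a = strU t b"
proof -
  have 1: "nN a = nN b" "tN a = tN b" "uU a = uU b" "xU a = xU b" and 2: "\<And>y. y \<ge> 0 \<Longrightarrow> tW a y = tW b y"
    using e unfolding eqU_def by auto
  have "shU t a \<Longrightarrow> \<not> nN a \<Longrightarrow> tW a (uU a - 1) = tW b (uU b - 1)" using 1 2 shU_uU[of t a] by auto
  then show ?thesis using eqU_shU[OF e, of t] unfolding strU_def 1 by metis
qed

lemma eqU_capU: "eqU a b \<Longrightarrow> capU t a = capU t b"
  unfolding eqU_def capU_def by simp

lemma eqU_dueU: assumes "shU t a" "eqU a b" shows "dueU t a = dueU t b"
proof -
  have 1: "nN a = nN b" "tN a = tN b" "uU a = uU b" "xU a = xU b" and 2: "\<And>y. y \<ge> 0 \<Longrightarrow> tW a y = tW b y"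
    using assms(2) unfolding eqU_def by auto
  have "\<not> nN a \<Longrightarrow> tW a (uU a) = tW b (uU b)" using 1 2 shU_uU[OF assms(1)] by auto
  then show ?thesis unfolding dueU_def 1 by auto
qed

lemma eqU_refl: "eqU a a" by (simp add: eqU_def)
lemma eqU_sym: "eqU a b \<Longrightarrow> eqU b a" by (simp add: eqU_def)
lemma eqU_trans: "eqU a b \<Longrightarrow> eqU b c \<Longrightarrow> eqU a c" by (simp add: eqU_def)

lemma updU_low:
  assumes "shU t v"
  shows "eqU (rfl (updU t m v)) (rfl v)"
proof -
  have "\<not> nN v \<Longrightarrow> 1 \<le> uU v" using shU_uU[OF assms] .
  then show ?thesis unfolding eqU_def updU_def by auto
qed

lemma updU_0[simp]: "m \<le> 0 \<Longrightarrow> updU t m v = v"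
  unfolding updU_def by simp


lemma shU_W: assumes "shU t v" "\<not> nN v"
  shows "1 \<le> uU v" "uU v \<le> t" "tW v (uU v - 1) \<le> t" "t \<le> tW v (uU v)" "tW v (uU v) \<le> t + 2"
    "\<And>y. y \<ge> uU v \<Longrightarrow> tW v y = tW v (uU v) + 2*(y - uU v)"
  using assms unfolding shU_def by blast+

lemma shU_N: assumes "shU t v" "nN v"
  shows "1 \<le> xU v" "tN v 0 \<le> t" "tN v (xU v - 1) \<le> t" "t \<le> tN v (xU v)" "tN v (xU v) \<le> t + 2"
    "\<And>x. x \<ge> xU v \<Longrightarrow> tN v x = tN v (xU v) + 2*(x - xU v)"
  using assms unfolding shU_def by blast+

lemma validH_W: "validH v \<Longrightarrow> y \<ge> 0 \<Longrightarrow> tW v y \<ge> y + 1 \<and> tW v y \<le> tW v (y+1) \<and> tW v (y+1) \<le> tW v y + 2"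
  unfolding validH_def by blast

lemma validH_N: "validH v \<Longrightarrow> nN v \<Longrightarrow> x \<ge> 0 \<Longrightarrow> tN v x \<ge> x + 1 \<and> tN v x \<le> tN v (x+1) \<and> tN v (x+1) \<le> tN v x + 2"
  unfolding validH_def by blast

lemma validH_C: "validH v \<Longrightarrow> nN v \<Longrightarrow> y \<ge> tN v 0 - 1 \<Longrightarrow> tW v y = y + 1"
  unfolding validH_def by blast

lemma validH_I:
  assumes "\<And>y. y \<ge> 0 \<Longrightarrow> tW v y \<ge> y + 1 \<and> tW v y \<le> tW v (y+1) \<and> tW v (y+1) \<le> tW v y + 2"
    and "nN v \<Longrightarrow> (\<And>x. x \<ge> 0 \<Longrightarrow> tN v x \<ge> x + 1 \<and> tN v x \<le> tN v (x+1) \<and> tN v (x+1) \<le> tN v x + 2)"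
    and "nN v \<Longrightarrow> (\<And>y. y \<ge> tN v 0 - 1 \<Longrightarrow> tW v y = y + 1)"
  shows "validH v"
  unfolding validH_def using assms by blast

lemma updA:
  assumes H: "validH v" and s: "shU t v" and nn: "\<not> nN v" and m: "1 \<le> m" "m \<le> t - uU v"
  shows "tW (updU t m v) = (\<lambda>y. if y < uU v then tW v y else if y < uU v + m then t else t + 2*(y - (uU v + m - 1)))"
    "nN (updU t m v) = False" "uU (updU t m v) = uU v + m" "tN (updU t m v) = tN v" "xU (updU t m v) = xU v"
  using m nn unfolding updU_def by simp_all

lemma updB:
  assumes H: "validH v" and s: "shU t v" and nn: "\<not> nN v" and m: "m > t - uU v"
  shows "tW (updU t m v) = (\<lambda>y. if y < uU v then tW v y else if y \<le> t - 1 then t else y + 1)"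
    "nN (updU t m v) = True" "tN (updU t m v) = (\<lambda>x. if x < m - (t - uU v) then t else t + 2*(x - (m - (t - uU v) - 1)))"
    "xU (updU t m v) = m - (t - uU v)"
proof -
  have "uU v \<le> t" using shU_W(2)[OF s nn] .
  then have "m > 0" using m by simp
  then show "tW (updU t m v) = (\<lambda>y. if y < uU v then tW v y else if y \<le> t - 1 then t else y + 1)"
    "nN (updU t m v) = True" "tN (updU t m v) = (\<lambda>x. if x < m - (t - uU v) then t else t + 2*(x - (m - (t - uU v) - 1)))"
    "xU (updU t m v) = m - (t - uU v)"
    using m nn unfolding updU_def by simp_all
qed

lemma updC:
  assumes nn: "nN v" and m: "1 \<le> m"
  shows "tW (updU t m v) = tW v" "nN (updU t m v) = True"
    "tN (updU t m v) = (\<lambda>x. if x < xU v then tN v x else if x < xU v + m then t else t + 2*(x - (xU v + m - 1)))"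
    "xU (updU t m v) = xU v + m" "uU (updU t m v) = uU v"
  using m nn unfolding updU_def by simp_all

lemma validH_updA:
  assumes H: "validH v" and s: "shU t v" and nn: "\<not> nN v" and m: "1 \<le> m" "m \<le> t - uU v"
  shows "validH (updU t m v)"
proof -
  define u where "u = uU v"
  have su: "1 \<le> u" "u \<le> t" "tW v (u - 1) \<le> t" "t \<le> tW v u" using shU_W(1-4)[OF s nn] unfolding u_def by auto
  have lip: "tW v u \<le> tW v (u-1) + 2" using validH_W[OF H, of "u-1"] su by auto
  note w = updA[OF H s nn m]
  show ?thesis
  proof (rule validH_I)
    fix y :: int assume y: "0 \<le> y"
    show "tW (updU t m v) y \<ge> y + 1 \<and> tW (updU t m v) y \<le> tW (updU t m v) (y+1) \<and> tW (updU t m v) (y+1) \<le> tW (updU t m v) y + 2"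
    proof (cases "y = u - 1")
      case True
      then have e: "tW v y = tW v (u-1)" by simp
      show ?thesis unfolding w(1) u_def[symmetric] using validH_W[OF H y] su m lip True e u_def by auto
    next
      case False
      show ?thesis unfolding w(1) u_def[symmetric] using validH_W[OF H y] su m lip False u_def by auto
    qed
  qed (use w in auto)
qed

lemma validH_updB:
  assumes H: "validH v" and s: "shU t v" and nn: "\<not> nN v" and m: "m > t - uU v" "m \<le> capU t v"
  shows "validH (updU t m v)"
proof -
  define u where "u = uU v"
  have su: "1 \<le> u" "u \<le> t" "tW v (u - 1) \<le> t" "t \<le> tW v u" using shU_W(1-4)[OF s nn] unfolding u_def by auto
  have lip: "tW v u \<le> tW v (u-1) + 2" using validH_W[OF H, of "u-1"] su by auto
  have lo: "tW v (u-1) \<ge> u" using validH_W[OF H, of "u-1"] su by auto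
  have mc: "m - (t - u) \<le> t" "m - (t - u) \<ge> 1" using m nn unfolding capU_def u_def by auto
  note w = updB[OF H s nn m(1)]
  show ?thesis
  proof (rule validH_I)
    fix y :: int assume y: "0 \<le> y"
    show "tW (updU t m v) y \<ge> y + 1 \<and> tW (updU t m v) y \<le> tW (updU t m v) (y+1) \<and> tW (updU t m v) (y+1) \<le> tW (updU t m v) y + 2"
    proof (cases "y = u - 1")
      case True
      then have e: "tW v y = tW v (u-1)" by simp
      show ?thesis unfolding w(1) u_def[symmetric] using validH_W[OF H y] su m lip lo True e by auto
    next
      case False
      show ?thesis unfolding w(1) u_def[symmetric] using validH_W[OF H y] su m lip lo False by auto
    qed
  next
    fix x :: int assume x: "0 \<le> x"
    show "tN (updU t m v) x \<ge> x + 1 \<and> tN (updU t m v) x \<le> tN (updU t m v) (x+1) \<and> tN (updU t m v) (x+1) \<le> tN (updU t m v) x + 2"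
      unfolding w(3) using mc x unfolding u_def[symmetric] by auto
  next
    fix y :: int assume y: "y \<ge> tN (updU t m v) 0 - 1"
    then have y': "y \<ge> t - 1" unfolding w(3) using mc unfolding u_def[symmetric] by auto
    show "tW (updU t m v) y = y + 1"
    proof (cases "y < u")
      case True
      then have yu: "y = u - 1" using y' su by auto
      then have e: "tW v y = tW v (u-1)" by simp
      have "u = t" using yu y' su by auto
      then show ?thesis unfolding w(1) u_def[symmetric] using e lo su True yu by auto
    next
      case False
      then show ?thesis unfolding w(1) using y' unfolding u_def[symmetric] by auto
    qed
  qed
qed

lemma validH_updC:
  assumes H: "validH v" and s: "shU t v" and nn: "nN v" and m: "1 \<le> m" "m \<le> capU t v"
  shows "validH (updU t m v)"
proof -
  define a where "a = xU v"
  have sa: "1 \<le> a" "tN v (a - 1) \<le> t" "t \<le> tN v a" using shU_N(1,3,4)[OF s nn] unfolding a_def by auto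
  have lip: "tN v a \<le> tN v (a-1) + 2" using validH_N[OF H nn, of "a-1"] sa by auto
  have mc: "a + m \<le> t" using m nn unfolding capU_def a_def by auto
  note w = updC[OF nn m(1)]
  show ?thesis
  proof (rule validH_I)
    fix y :: int assume y: "0 \<le> y"
    show "tW (updU t m v) y \<ge> y + 1 \<and> tW (updU t m v) y \<le> tW (updU t m v) (y+1) \<and> tW (updU t m v) (y+1) \<le> tW (updU t m v) y + 2"
      unfolding w(1) using validH_W[OF H y] by auto
  next
    fix x :: int assume x: "0 \<le> x"
    show "tN (updU t m v) x \<ge> x + 1 \<and> tN (updU t m v) x \<le> tN (updU t m v) (x+1) \<and> tN (updU t m v) (x+1) \<le> tN (updU t m v) x + 2"
    proof (cases "x = a - 1")
      case True
      then have e: "tN v x = tN v (a-1)" by simp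
      show ?thesis unfolding w(3) a_def[symmetric] using validH_N[OF H nn x] sa mc lip x True e m by auto
    next
      case False
      show ?thesis unfolding w(3) a_def[symmetric] using validH_N[OF H nn x] sa mc lip x False m by auto
    qed
  next
    fix y :: int assume y: "y \<ge> tN (updU t m v) 0 - 1"
    then have "y \<ge> tN v 0 - 1" unfolding w(3) using sa unfolding a_def[symmetric] by auto
    then show "tW (updU t m v) y = y + 1" unfolding w(1) using validH_C[OF H nn] by auto
  qed
qed

lemma validH_upd:
  assumes H: "validH v" and s: "shU t v" and m: "m \<le> capU t v"
  shows "validH (updU t m v)"
proof (cases "m \<le> 0")
  case True then show ?thesis using H by simp
next
  case False
  show ?thesis
  proof (cases "nN v")
    case True then show ?thesis using validH_updC[OF H s True _ m] False by simp
  next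
    case nn: False
    show ?thesis
    proof (cases "m \<le> t - uU v")
      case True then show ?thesis using validH_updA[OF H s nn _ True] False by simp
    next
      case False then show ?thesis using validH_updB[OF H s nn _ m] by simp
    qed
  qed
qed


lemma shU_I:
  assumes "\<not> nN v \<Longrightarrow> 1 \<le> uU v \<and> uU v \<le> t \<and> tW v (uU v - 1) \<le> t \<and> t \<le> tW v (uU v) \<and> tW v (uU v) \<le> t + 2"
    "\<not> nN v \<Longrightarrow> (\<And>y. y \<ge> uU v \<Longrightarrow> tW v y = tW v (uU v) + 2*(y - uU v))"
    "nN v \<Longrightarrow> 1 \<le> xU v \<and> tN v 0 \<le> t \<and> tN v (xU v - 1) \<le> t \<and> t \<le> tN v (xU v) \<and> tN v (xU v) \<le> t + 2"
    "nN v \<Longrightarrow> (\<And>x. x \<ge> xU v \<Longrightarrow> tN v x = tN v (xU v) + 2*(x - xU v))"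
  shows "shU t v"
  unfolding shU_def using assms by blast

lemma sh_upd0:
  assumes s: "shU t v" and nd: "\<not> dueU t v"
  shows "strU (t+1) v \<and> capU (t+1) v \<le> capU t v + 2"
proof -
  have "shU (t+1) v"
  proof (rule shU_I)
    assume nn: "\<not> nN v"
    have "tW v (uU v) \<noteq> t" using nd nn unfolding dueU_def by simp
    then show "1 \<le> uU v \<and> uU v \<le> t + 1 \<and> tW v (uU v - 1) \<le> t + 1 \<and> t + 1 \<le> tW v (uU v) \<and> tW v (uU v) \<le> t + 1 + 2"
      using shU_W(1-5)[OF s nn] by auto
    show "\<And>y. y \<ge> uU v \<Longrightarrow> tW v y = tW v (uU v) + 2*(y - uU v)" using shU_W(6)[OF s nn] by blast
  next
    assume nn: "nN v"
    have "tN v (xU v) \<noteq> t" using nd nn unfolding dueU_def by simp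
    then show "1 \<le> xU v \<and> tN v 0 \<le> t + 1 \<and> tN v (xU v - 1) \<le> t + 1 \<and> t + 1 \<le> tN v (xU v) \<and> tN v (xU v) \<le> t + 1 + 2"
      using shU_N(1-5)[OF s nn] by auto
    show "\<And>x. x \<ge> xU v \<Longrightarrow> tN v x = tN v (xU v) + 2*(x - xU v)" using shU_N(6)[OF s nn] by blast
  qed
  moreover have "(\<not> nN v \<longrightarrow> tW v (uU v - 1) \<le> t + 1 - 1) \<and> (nN v \<longrightarrow> tN v (xU v - 1) \<le> t + 1 - 1 \<and> tN v 0 \<le> t + 1 - 1)"
    using shU_W(3)[OF s] shU_N(2,3)[OF s] by auto
  ultimately show ?thesis unfolding strU_def capU_def by auto
qed

lemma sh_updA:
  assumes H: "validH v" and s: "shU t v" and nn: "\<not> nN v" and m: "1 \<le> m" "m \<le> t - uU v"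
  shows "strU (t+1) (updU t m v) \<and> \<not> dueU (t+1) (updU t m v) \<and> capU (t+1) (updU t m v) \<le> capU t v + 2 - m"
proof -
  note w = updA[OF H s nn m]
  define u where "u = uU v"
  have su: "1 \<le> u" "u \<le> t" using shU_W(1,2)[OF s nn] unfolding u_def by auto
  have v1: "tW (updU t m v) (uU (updU t m v) - 1) = t" unfolding w using m su u_def by auto
  have v2: "tW (updU t m v) (uU (updU t m v)) = t + 2" unfolding w using m su u_def by auto
  have v3: "\<And>y. y \<ge> uU (updU t m v) \<Longrightarrow> tW (updU t m v) y = tW (updU t m v) (uU (updU t m v)) + 2*(y - uU (updU t m v))"
    unfolding w using m su u_def by auto
  have "shU (t+1) (updU t m v)"
    by (rule shU_I) (use w v1 v2 v3 m su u_def in auto)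
  then show ?thesis unfolding strU_def dueU_def capU_def using w v1 v2 v3 m su u_def nn by auto
qed

lemma sh_updB:
  assumes H: "validH v" and s: "shU t v" and nn: "\<not> nN v" and m: "m > t - uU v" "m \<le> capU t v"
  shows "strU (t+1) (updU t m v) \<and> \<not> dueU (t+1) (updU t m v) \<and> capU (t+1) (updU t m v) \<le> capU t v + 2 - m"
proof -
  note w = updB[OF H s nn m(1)]
  define u where "u = uU v"
  have su: "1 \<le> u" "u \<le> t" using shU_W(1,2)[OF s nn] unfolding u_def by auto
  have mc: "m - (t - u) \<le> t" "m - (t - u) \<ge> 1" using m nn unfolding capU_def u_def by auto
  have v0: "tN (updU t m v) 0 = t" unfolding w using mc u_def by auto
  have v1: "tN (updU t m v) (xU (updU t m v) - 1) = t" unfolding w using mc u_def by auto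
  have v2: "tN (updU t m v) (xU (updU t m v)) = t + 2" unfolding w using mc u_def by auto
  have v3: "\<And>x. x \<ge> xU (updU t m v) \<Longrightarrow> tN (updU t m v) x = tN (updU t m v) (xU (updU t m v)) + 2*(x - xU (updU t m v))"
    unfolding w using mc u_def by auto
  have "shU (t+1) (updU t m v)"
    by (rule shU_I) (use w v0 v1 v2 v3 mc su u_def in auto)
  then show ?thesis unfolding strU_def dueU_def capU_def using w v0 v1 v2 v3 mc su u_def nn by auto
qed

lemma sh_updC:
  assumes H: "validH v" and s: "shU t v" and nn: "nN v" and m: "1 \<le> m" "m \<le> capU t v"
  shows "strU (t+1) (updU t m v) \<and> \<not> dueU (t+1) (updU t m v) \<and> capU (t+1) (updU t m v) \<le> capU t v + 2 - m"
proof -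
  note w = updC[OF nn m(1)]
  define a where "a = xU v"
  have sa: "1 \<le> a" "tN v 0 \<le> t" using shU_N(1,2)[OF s nn] unfolding a_def by auto
  have mc: "a + m \<le> t" using m nn unfolding capU_def a_def by auto
  have v0: "tN (updU t m v) 0 = tN v 0" unfolding w using sa a_def by auto
  have v1: "tN (updU t m v) (xU (updU t m v) - 1) = t" unfolding w using mc m a_def by auto
  have v2: "tN (updU t m v) (xU (updU t m v)) = t + 2" unfolding w using mc m a_def by auto
  have v3: "\<And>x. x \<ge> xU (updU t m v) \<Longrightarrow> tN (updU t m v) x = tN (updU t m v) (xU (updU t m v)) + 2*(x - xU (updU t m v))"
    unfolding w using mc m a_def by auto
  have "shU (t+1) (updU t m v)"
    by (rule shU_I) (use w v0 v1 v2 v3 mc sa m a_def in auto)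
  then show ?thesis unfolding strU_def dueU_def capU_def using w v0 v1 v2 v3 mc sa m a_def nn by auto
qed

lemma sh_upd:
  assumes H: "validH v" and s: "shU t v" and m: "0 \<le> m" "m \<le> capU t v" and d: "dueU t v \<longrightarrow> m \<ge> 1"
  shows "strU (t+1) (updU t m v) \<and> (m \<ge> 1 \<longrightarrow> \<not> dueU (t+1) (updU t m v)) \<and> capU (t+1) (updU t m v) \<le> capU t v + 2 - m"
proof (cases "m \<le> 0")
  case True
  then have "m = 0" using m by simp
  then show ?thesis using sh_upd0[OF s] d by auto
next
  case False
  show ?thesis
  proof (cases "nN v")
    case True then show ?thesis using sh_updC[OF H s True _ m(2)] False by simp
  next
    case nn: False
    show ?thesis
    proof (cases "m \<le> t - uU v")
      case True then show ?thesis using sh_updA[OF H s nn _ True] False by simp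
    next
      case False then show ?thesis using sh_updB[OF H s nn _ m(2)] by simp
    qed
  qed
qed


fun dd :: "int \<times> int \<Rightarrow> int" where "dd (x,y) = \<bar>x\<bar> + \<bar>y\<bar>"

lemma agree_gen:
  assumes W: "\<And>y. tW a y \<noteq> tW b y \<Longrightarrow> tW a y > d \<and> tW b y > d"
    and N: "\<And>x. x \<ge> 0 \<Longrightarrow> (nN a \<and> tN a x \<le> d) \<longleftrightarrow> (nN b \<and> tN b x \<le> d)"
    and N2: "\<And>x. x \<ge> 0 \<Longrightarrow> nN a \<Longrightarrow> tN a x \<le> d \<Longrightarrow> tN b x = tN a x"
    and S: "\<And>x. x \<ge> 0 \<Longrightarrow> (nS a \<and> tS a x \<le> d) \<longleftrightarrow> (nS b \<and> tS b x \<le> d)"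
    and S2: "\<And>x. x \<ge> 0 \<Longrightarrow> nS a \<Longrightarrow> tS a x \<le> d \<Longrightarrow> tS b x = tS a x"
    and C: "\<And>y. \<bar>y\<bar> < d \<Longrightarrow> capW a y = capW b y"
    and p: "dd (x,y) \<le> d"
  shows "inE a (x,y) = inE b (x,y) \<and> wallNC a (x,y) = wallNC b (x,y)"
proof -
  have p1: "-x + \<bar>y\<bar> \<le> d" using p abs_ge_minus_self[of x] by simp
  have w1: "(x < 0 \<and> -x + \<bar>y\<bar> \<ge> tW a y) = (x < 0 \<and> -x + \<bar>y\<bar> \<ge> tW b y)"
  proof (cases "tW a y = tW b y")
    case False
    then show ?thesis using W[of y] p1 by linarith
  qed simp
  have w2: "(x < 0 \<and> -x + \<bar>y\<bar> = tW a y \<and> \<not> capW a y) = (x < 0 \<and> -x + \<bar>y\<bar> = tW b y \<and> \<not> capW b y)"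
  proof (cases "x < 0")
    case True
    then have "\<bar>y\<bar> < d" using p1 by linarith
    then have c: "capW a y = capW b y" using C by blast
    show ?thesis
    proof (cases "tW a y = tW b y")
      case False
      then show ?thesis using W[of y] p1 by linarith
    qed (simp add: c)
  qed simp
  have n1: "(nN a \<and> x \<ge> 0 \<and> y > 0 \<and> x + y \<ge> tN a x) = (nN b \<and> x \<ge> 0 \<and> y > 0 \<and> x + y \<ge> tN b x)"
  proof (cases "x \<ge> 0 \<and> y > 0")
    case True
    then have xy: "x + y \<le> d" using p by simp
    have A: "nN a \<and> x + y \<ge> tN a x \<Longrightarrow> nN b \<and> x + y \<ge> tN b x"
    proof -
      assume h: "nN a \<and> x + y \<ge> tN a x"
      then have "tN a x \<le> d" using xy by linarith
      then show ?thesis using N[of x] N2[of x] True h by auto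
    qed
    have B: "nN b \<and> x + y \<ge> tN b x \<Longrightarrow> nN a \<and> x + y \<ge> tN a x"
    proof -
      assume h: "nN b \<and> x + y \<ge> tN b x"
      then have "tN b x \<le> d" using xy by linarith
      then have "nN a \<and> tN a x \<le> d" using N[of x] True h by auto
      then show ?thesis using N2[of x] True h by auto
    qed
    show ?thesis using A B True by blast
  qed auto
  have n2: "(nN a \<and> x \<ge> 0 \<and> y > 0 \<and> x + y = tN a x) = (nN b \<and> x \<ge> 0 \<and> y > 0 \<and> x + y = tN b x)"
  proof (cases "x \<ge> 0 \<and> y > 0")
    case True
    then have xy: "x + y \<le> d" using p by simp
    have A: "nN a \<and> x + y = tN a x \<Longrightarrow> nN b \<and> x + y = tN b x"
    proof -
      assume h: "nN a \<and> x + y = tN a x"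
      then have "tN a x \<le> d" using xy by linarith
      then show ?thesis using N[of x] N2[of x] True h by auto
    qed
    have B: "nN b \<and> x + y = tN b x \<Longrightarrow> nN a \<and> x + y = tN a x"
    proof -
      assume h: "nN b \<and> x + y = tN b x"
      then have "tN b x \<le> d" using xy by linarith
      then have "nN a \<and> tN a x \<le> d" using N[of x] True h by auto
      then show ?thesis using N2[of x] True h by auto
    qed
    show ?thesis using A B True by blast
  qed auto
  have s1: "(nS a \<and> x \<ge> 0 \<and> y < 0 \<and> x - y \<ge> tS a x) = (nS b \<and> x \<ge> 0 \<and> y < 0 \<and> x - y \<ge> tS b x)"
  proof (cases "x \<ge> 0 \<and> y < 0")
    case True
    then have xy: "x - y \<le> d" using p by simp
    have A: "nS a \<and> x - y \<ge> tS a x \<Longrightarrow> nS b \<and> x - y \<ge> tS b x"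
    proof -
      assume h: "nS a \<and> x - y \<ge> tS a x"
      then have "tS a x \<le> d" using xy by linarith
      then show ?thesis using S[of x] S2[of x] True h by auto
    qed
    have B: "nS b \<and> x - y \<ge> tS b x \<Longrightarrow> nS a \<and> x - y \<ge> tS a x"
    proof -
      assume h: "nS b \<and> x - y \<ge> tS b x"
      then have "tS b x \<le> d" using xy by linarith
      then have "nS a \<and> tS a x \<le> d" using S[of x] True h by auto
      then show ?thesis using S2[of x] True h by auto
    qed
    show ?thesis using A B True by blast
  qed auto
  have s2: "(nS a \<and> x \<ge> 0 \<and> y < 0 \<and> x - y = tS a x) = (nS b \<and> x \<ge> 0 \<and> y < 0 \<and> x - y = tS b x)"
  proof (cases "x \<ge> 0 \<and> y < 0")
    case True
    then have xy: "x - y \<le> d" using p by simp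
    have A: "nS a \<and> x - y = tS a x \<Longrightarrow> nS b \<and> x - y = tS b x"
    proof -
      assume h: "nS a \<and> x - y = tS a x"
      then have "tS a x \<le> d" using xy by linarith
      then show ?thesis using S[of x] S2[of x] True h by auto
    qed
    have B: "nS b \<and> x - y = tS b x \<Longrightarrow> nS a \<and> x - y = tS a x"
    proof -
      assume h: "nS b \<and> x - y = tS b x"
      then have "tS b x \<le> d" using xy by linarith
      then have "nS a \<and> tS a x \<le> d" using S[of x] True h by auto
      then show ?thesis using S2[of x] True h by auto
    qed
    show ?thesis using A B True by blast
  qed auto
  show ?thesis unfolding inE.simps wallNC.simps by (simp only: w1 w2 n1 n2 s1 s2)
qed

lemma updU_S[simp]: "nS (updU t m v) = nS v" "tS (updU t m v) = tS v" "uL (updU t m v) = uL v" "xL (updU t m v) = xL v"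
  unfolding updU_def by simp_all

lemma agree_upd:
  assumes H: "validH v" and s: "shU t v" and m: "m \<le> capU t v" and p: "dd (x,y) \<le> t - 1"
  shows "inE (updU t m v) (x,y) = inE v (x,y) \<and> wallNC (updU t m v) (x,y) = wallNC v (x,y)"
proof (cases "m \<le> 0")
  case True then show ?thesis by simp
next
  case m0: False
  show ?thesis
  proof (cases "nN v")
    case nn: True
    have m1: "1 \<le> m" using m0 by simp
    note w = updC[OF nn m1, of t]
    have sa: "1 \<le> xU v" "t \<le> tN v (xU v)" using shU_N(1,4)[OF s nn] by auto
    have ray: "\<And>x. x \<ge> xU v \<Longrightarrow> tN v x \<ge> t"
    proof -
      fix x assume xx: "x \<ge> xU v"
      have "tN v x = tN v (xU v) + 2*(x - xU v)" using xx by (rule shU_N(6)[OF s nn])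
      moreover have "x - xU v \<ge> 0" using xx by simp
      ultimately show "tN v x \<ge> t" using shU_N(4)[OF s nn] by simp
    qed
    show ?thesis
    proof (rule agree_gen)
      show "\<And>y. tW (updU t m v) y \<noteq> tW v y \<Longrightarrow> tW (updU t m v) y > t - 1 \<and> tW v y > t - 1"
        using w m0 by simp
      have key: "\<And>x. tN (updU t m v) x \<le> t - 1 \<or> tN v x \<le> t - 1 \<Longrightarrow> tN (updU t m v) x = tN v x"
      proof -
        fix x assume a: "tN (updU t m v) x \<le> t - 1 \<or> tN v x \<le> t - 1"
        show "tN (updU t m v) x = tN v x"
        proof (cases "x < xU v")
          case True then show ?thesis using w m0 by simp
        next
          case False
          then have "tN v x \<ge> t" by (intro ray) simp
          moreover have "tN (updU t m v) x \<ge> t" using False w m0 by simp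
          ultimately show ?thesis using a by simp
        qed
      qed
      have e: "nN (updU t m v) = nN v" using w(2) nn by simp
      show "\<And>x. x \<ge> 0 \<Longrightarrow> (nN (updU t m v) \<and> tN (updU t m v) x \<le> t - 1) \<longleftrightarrow> (nN v \<and> tN v x \<le> t - 1)"
      proof -
        fix x
        have "tN (updU t m v) x \<le> t - 1 \<longleftrightarrow> tN v x \<le> t - 1"
        proof
          assume a: "tN (updU t m v) x \<le> t - 1"
          have "tN (updU t m v) x = tN v x" by (rule key) (use a in simp)
          then show "tN v x \<le> t - 1" using a by simp
        next
          assume a: "tN v x \<le> t - 1"
          have "tN (updU t m v) x = tN v x" by (rule key) (use a in simp)
          then show "tN (updU t m v) x \<le> t - 1" using a by simp
        qed
        then show "(nN (updU t m v) \<and> tN (updU t m v) x \<le> t - 1) \<longleftrightarrow> (nN v \<and> tN v x \<le> t - 1)"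
          using e by simp
      qed
      show "\<And>x. x \<ge> 0 \<Longrightarrow> nN (updU t m v) \<Longrightarrow> tN (updU t m v) x \<le> t - 1 \<Longrightarrow> tN v x = tN (updU t m v) x"
      proof -
        fix x assume a: "tN (updU t m v) x \<le> t - 1"
        have "tN (updU t m v) x = tN v x" by (rule key) (use a in simp)
        then show "tN v x = tN (updU t m v) x" by simp
      qed
      show "\<And>y. \<bar>y\<bar> < t - 1 \<Longrightarrow> capW (updU t m v) y = capW v y"
        unfolding capW_def using w m0 nn sa by auto
    qed (use p in auto)
  next
    case nn: False
    have su: "1 \<le> uU v" "uU v \<le> t" "t \<le> tW v (uU v)" using shU_W(1,2,4)[OF s nn] by auto
    have ray: "\<And>y. y \<ge> uU v \<Longrightarrow> tW v y \<ge> t"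
    proof -
      fix y assume yy: "y \<ge> uU v"
      have "tW v y = tW v (uU v) + 2*(y - uU v)" using yy by (rule shU_W(6)[OF s nn])
      moreover have "y - uU v \<ge> 0" using yy by simp
      ultimately show "tW v y \<ge> t" using shU_W(4)[OF s nn] by simp
    qed
    show ?thesis
    proof (cases "m \<le> t - uU v")
      case True
      have m1: "1 \<le> m" using m0 by simp
      note w = updA[OF H s nn m1 True]
      show ?thesis
      proof (rule agree_gen)
        show "\<And>y. tW (updU t m v) y \<noteq> tW v y \<Longrightarrow> tW (updU t m v) y > t - 1 \<and> tW v y > t - 1"
        proof -
          fix y assume ne: "tW (updU t m v) y \<noteq> tW v y"
          then have yu: "y \<ge> uU v" using w by (cases "y < uU v") auto
          have "tW v y \<ge> t" using ray[OF yu] .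
          moreover have "tW (updU t m v) y \<ge> t" using yu w by auto
          ultimately show "tW (updU t m v) y > t - 1 \<and> tW v y > t - 1" by simp
        qed
        show "\<And>x. x \<ge> 0 \<Longrightarrow> (nN (updU t m v) \<and> tN (updU t m v) x \<le> t - 1) \<longleftrightarrow> (nN v \<and> tN v x \<le> t - 1)"
          using w m0 nn by auto
        show "\<And>x. x \<ge> 0 \<Longrightarrow> nN (updU t m v) \<Longrightarrow> tN (updU t m v) x \<le> t - 1 \<Longrightarrow> tN v x = tN (updU t m v) x"
          using w m0 nn by auto
        show "\<And>y. \<bar>y\<bar> < t - 1 \<Longrightarrow> capW (updU t m v) y = capW v y"
          unfolding capW_def using w m0 nn by auto
      qed (use p in auto)
    next
      case False
      note w = updB[OF H s nn] 
      have mc: "m - (t - uU v) \<ge> 1" using False by auto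
      show ?thesis
      proof (rule agree_gen)
        show "\<And>y. tW (updU t m v) y \<noteq> tW v y \<Longrightarrow> tW (updU t m v) y > t - 1 \<and> tW v y > t - 1"
        proof -
          fix y assume ne: "tW (updU t m v) y \<noteq> tW v y"
          then have yu: "y \<ge> uU v" using w False by (cases "y < uU v") auto
          have "tW v y \<ge> t" using ray[OF yu] .
          moreover have "tW (updU t m v) y \<ge> t" using yu w False by auto
          ultimately show "tW (updU t m v) y > t - 1 \<and> tW v y > t - 1" by simp
        qed
        show "\<And>x. x \<ge> 0 \<Longrightarrow> (nN (updU t m v) \<and> tN (updU t m v) x \<le> t - 1) \<longleftrightarrow> (nN v \<and> tN v x \<le> t - 1)"
          using w False nn by auto
        show "\<And>x. x \<ge> 0 \<Longrightarrow> nN (updU t m v) \<Longrightarrow> tN (updU t m v) x \<le> t - 1 \<Longrightarrow> tN v x = tN (updU t m v) x"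
          using w False nn by (auto split: if_splits)
        show "\<And>y. \<bar>y\<bar> < t - 1 \<Longrightarrow> capW (updU t m v) y = capW v y"
          unfolding capW_def using w False nn mc by auto
      qed (use p in auto)
    qed
  qed
qed


definition newU :: "int \<Rightarrow> int \<Rightarrow> vs \<Rightarrow> (int \<times> int) set" where
"newU t m v = (if m \<le> 0 then {} else if \<not> nN v then
   (if m \<le> t - uU v then (\<lambda>y. (y - t, y)) ` {uU v..<uU v + m}
    else (\<lambda>y. (y - t, y)) ` {uU v..<t} \<union> (\<lambda>x. (x, t - x)) ` {0..<m - (t - uU v)})
   else (\<lambda>x. (x, t - x)) ` {xU v..<xU v + m})"

definition clEq :: "int \<Rightarrow> vs \<Rightarrow> int \<times> int \<Rightarrow> bool" where
"clEq t v p \<longleftrightarrow> (fst p < 0 \<and> 0 \<le> snd p \<and> (if nN v then snd p < tN v 0 else snd p < uU v) \<and> tW v (snd p) = t)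
   \<or> (nN v \<and> fst p \<ge> 0 \<and> snd p > 0 \<and> fst p < xU v \<and> tN v (fst p) = t)"

lemma card_img_int: "int (card ((f::int \<Rightarrow> int \<times> int) ` {a..<b})) \<le> max 0 (b - a)"
proof -
  have "card (f ` {a..<b}) \<le> card {a..<b}" by (rule card_image_le) simp
  then show ?thesis by simp
qed

lemma card_newU:
  assumes s: "shU t v" and m: "0 \<le> m" "m \<le> capU t v"
  shows "finite (newU t m v) \<and> int (card (newU t m v)) \<le> m"
proof (cases "m \<le> 0")
  case True then show ?thesis unfolding newU_def using m by simp
next
  case m0: False
  show ?thesis
  proof (cases "nN v")
    case True
    have "int (card ((\<lambda>x. (x, t - x)) ` {xU v..<xU v + m})) \<le> m"
      using card_img_int[of "\<lambda>x. (x, t - x)" "xU v" "xU v + m"] m0 by simp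
    then show ?thesis unfolding newU_def using True m0 by simp
  next
    case nn: False
    have u: "uU v \<le> t" using shU_W(2)[OF s nn] .
    show ?thesis
    proof (cases "m \<le> t - uU v")
      case True
      have "int (card ((\<lambda>y. (y - t, y)) ` {uU v..<uU v + m})) \<le> m"
        using card_img_int[of "\<lambda>y. (y - t, y)" "uU v" "uU v + m"] m0 by simp
      then show ?thesis unfolding newU_def using True m0 nn by simp
    next
      case False
      have c1: "int (card ((\<lambda>y. (y - t, y)) ` {uU v..<t})) \<le> t - uU v"
        using card_img_int[of "\<lambda>y. (y - t, y)" "uU v" t] u by simp
      have c2: "int (card ((\<lambda>x. (x, t - x)) ` {0..<m - (t - uU v)})) \<le> m - (t - uU v)"
        using card_img_int[of "\<lambda>x. (x, t - x)" 0 "m - (t - uU v)"] False by simp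
      have "card ((\<lambda>y. (y - t, y)) ` {uU v..<t} \<union> (\<lambda>x. (x, t - x)) ` {0..<m - (t - uU v)})
          \<le> card ((\<lambda>y. (y - t, y)) ` {uU v..<t}) + card ((\<lambda>x. (x, t - x)) ` {0..<m - (t - uU v)})"
        by (rule card_Un_le)
      then have "int (card ((\<lambda>y. (y - t, y)) ` {uU v..<t} \<union> (\<lambda>x. (x, t - x)) ` {0..<m - (t - uU v)})) \<le> m"
        using c1 c2 by linarith
      then show ?thesis unfolding newU_def using False m0 nn by simp
    qed
  qed
qed

lemma newwall_upd:
  assumes H: "validH v" and s: "shU t v" and m: "0 \<le> m" "m \<le> capU t v" and d: "dueU t v \<longrightarrow> m \<ge> 1"
    and p: "\<bar>x\<bar> + \<bar>y\<bar> = t" and up: "y > 0 \<or> (y = 0 \<and> x < 0)" and wl: "wallNC (updU t m v) (x,y)"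
  shows "(x,y) \<in> newU t m v \<or> clEq t v (x,y)"
proof -
  have y0: "y \<ge> 0" using up by auto
  have WN: "(x < 0 \<and> -x + y = tW (updU t m v) y \<and> \<not> capW (updU t m v) y) \<or> (nN (updU t m v) \<and> x \<ge> 0 \<and> y > 0 \<and> x + y = tN (updU t m v) x)"
    using wl y0 by auto
  have pW: "x < 0 \<Longrightarrow> -x + y = t" using p y0 by simp
  have pN: "x \<ge> 0 \<Longrightarrow> x + y = t" using p y0 by simp
  show ?thesis
  proof (cases "m \<le> 0")
    case m0: True
    then have w: "updU t m v = v" by simp
    show ?thesis
    proof (cases "x < 0")
      case xn: True
      then have e: "tW v y = t" and nc: "\<not> capW v y" using WN pW w by auto
      show ?thesis
      proof (cases "nN v")
        case True
        then have "y < tN v 0" using nc unfolding capW_def by auto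
        then show ?thesis unfolding clEq_def using True xn y0 e by auto
      next
        case nn: False
        show ?thesis
        proof (cases "y < uU v")
          case True then show ?thesis unfolding clEq_def using nn xn y0 e by auto
        next
          case False
          then have r: "tW v y = tW v (uU v) + 2*(y - uU v)" by (intro shU_W(6)[OF s nn]) simp
          have "t \<le> tW v (uU v)" using shU_W(4)[OF s nn] .
          then have "tW v (uU v) = t" using r e False by simp
          then have "dueU t v" unfolding dueU_def using nn by simp
          then show ?thesis using d m0 by simp
        qed
      qed
    next
      case xp: False
      then have nv: "nN v" and e: "tN v x = t" and yp: "y > 0" using WN pN w by auto
      show ?thesis
      proof (cases "x < xU v")
        case True then show ?thesis unfolding clEq_def using nv xp yp e by auto
      next
        case False
        then have r: "tN v x = tN v (xU v) + 2*(x - xU v)" by (intro shU_N(6)[OF s nv]) simp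
        have "t \<le> tN v (xU v)" using shU_N(4)[OF s nv] .
        then have "tN v (xU v) = t" using r e False by simp
        then have "dueU t v" unfolding dueU_def using nv by simp
        then show ?thesis using d m0 by simp
      qed
    qed
  next
    case m0: False
    then have m1: "1 \<le> m" by simp
    show ?thesis
    proof (cases "nN v")
      case nv: True
      note w = updC[OF nv m1, of t]
      have x1: "1 \<le> xU v" using shU_N(1)[OF s nv] .
      have cw: "capW (updU t m v) y = capW v y" unfolding capW_def using w x1 nv by simp
      show ?thesis
      proof (cases "x < 0")
        case xn: True
        then have e: "tW v y = t" and nc: "\<not> capW v y" using WN pW w cw by auto
        then have "y < tN v 0" using nc nv unfolding capW_def by auto
        then show ?thesis unfolding clEq_def using nv xn y0 e by auto
      next
        case xp: False
        then have e: "tN (updU t m v) x = t" and yp: "y > 0" using WN pN by auto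
        show ?thesis
        proof (cases "x < xU v")
          case True
          then have "tN v x = t" using e w by simp
          then show ?thesis unfolding clEq_def using nv xp yp True by auto
        next
          case False
          show ?thesis
          proof (cases "x < xU v + m")
            case True
            have "y = t - x" using pN xp by simp
            then have "(x,y) \<in> (\<lambda>x. (x, t - x)) ` {xU v..<xU v + m}" using True False by auto
            then show ?thesis unfolding newU_def using nv m0 by simp
          next
            case False2: False
            then have "tN (updU t m v) x = t + 2*(x - (xU v + m - 1))" using w False by simp
            then show ?thesis using e False2 by simp
          qed
        qed
      qed
    next
      case nn: False
      have u1: "1 \<le> uU v" using shU_W(1)[OF s nn] .
      show ?thesis
      proof (cases "m \<le> t - uU v")
        case mA: True
        note w = updA[OF H s nn m1 mA]
        show ?thesis
        proof (cases "x < 0")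
          case xn: True
          then have e: "tW (updU t m v) y = t" using WN pW by auto
          show ?thesis
          proof (cases "y < uU v")
            case True
            then have "tW v y = t" using e w by simp
            then show ?thesis unfolding clEq_def using nn xn y0 True by auto
          next
            case False
            show ?thesis
            proof (cases "y < uU v + m")
              case True
              have "x = y - t" using pW xn by simp
              then have "(x,y) \<in> (\<lambda>y. (y - t, y)) ` {uU v..<uU v + m}" using True False by auto
              then show ?thesis unfolding newU_def using nn m0 mA by simp
            next
              case False2: False
              then have "tW (updU t m v) y = t + 2*(y - (uU v + m - 1))" using w False by simp
              then show ?thesis using e False2 by simp
            qed
          qed
        next
          case False
          then show ?thesis using WN w by simp
        qed
      next
        case mB: False
        note w = updB[OF H s nn] 
        show ?thesis
        proof (cases "x < 0")
          case xn: True
          then have e: "tW (updU t m v) y = t" and nc: "\<not> capW (updU t m v) y" using WN pW by auto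
          show ?thesis
          proof (cases "y < uU v")
            case True
            then have "tW v y = t" using e w mB by simp
            then show ?thesis unfolding clEq_def using nn xn y0 True by auto
          next
            case False
            show ?thesis
            proof (cases "y \<le> t - 1")
              case True
              have "x = y - t" using pW xn by simp
              then have "(x,y) \<in> (\<lambda>y. (y - t, y)) ` {uU v..<t}" using True False by auto
              then show ?thesis unfolding newU_def using nn m0 mB by simp
            next
              case False2: False
              have "tN (updU t m v) 0 = t" using w mB by simp
              then have "capW (updU t m v) y" unfolding capW_def using w mB False2 by simp
              then show ?thesis using nc by simp
            qed
          qed
        next
          case xp: False
          then have e: "tN (updU t m v) x = t" and yp: "y > 0" using WN pN by auto
          have "x < m - (t - uU v)"
          proof (rule ccontr)
            assume "\<not> x < m - (t - uU v)"
            then have "tN (updU t m v) x = t + 2*(x - (m - (t - uU v) - 1))" using w mB by simp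
            then show False using e \<open>\<not> x < m - (t - uU v)\<close> by simp
          qed
          moreover have "y = t - x" using pN xp by simp
          ultimately have "(x,y) \<in> (\<lambda>x. (x, t - x)) ` {0..<m - (t - uU v)}" using xp by auto
          then show ?thesis unfolding newU_def using nn m0 mB by simp
        qed
      qed
    qed
  qed
qed


lemma eqU_newU: "eqU a b \<Longrightarrow> newU t m a = newU t m b"
  unfolding eqU_def newU_def by simp

lemma eqU_clEq: "eqU a b \<Longrightarrow> clEq t a p = clEq t b p"
  unfolding eqU_def clEq_def by auto

lemma wallNC_eqU_up:
  assumes e: "eqU a b" and ha: "validH (rfl a)" and hb: "validH (rfl b)" and y: "y \<ge> 0"
  shows "wallNC a (x,y) = wallNC b (x,y)"
proof -
  have sa: "nS a \<Longrightarrow> tS a 0 \<ge> 1" using validH_N[OF ha, of 0] by simp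
  have sb: "nS b \<Longrightarrow> tS b 0 \<ge> 1" using validH_N[OF hb, of 0] by simp
  have ca: "capW a y = (nN a \<and> y \<ge> tN a 0)" unfolding capW_def using sa y by auto
  have cb: "capW b y = (nN b \<and> y \<ge> tN b 0)" unfolding capW_def using sb y by auto
  have 1: "nN a = nN b" "tN a = tN b" "tW a y = tW b y" using e y unfolding eqU_def by auto
  show ?thesis using ca cb 1 y by simp
qed

lemma inE_eqU_up:
  assumes e: "eqU a b" and y: "y > 0 \<or> (y = 0 \<and> x < 0)"
  shows "inE a (x,y) = inE b (x,y)"
proof -
  have 1: "nN a = nN b" "tN a = tN b" "tW a y = tW b y" using e y unfolding eqU_def by auto
  show ?thesis using 1 y by auto
qed

definition upd :: "int \<Rightarrow> int \<Rightarrow> int \<Rightarrow> vs \<Rightarrow> vs" where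
"upd t mu ml v = rfl (updU t ml (rfl (updU t mu v)))"

lemma clEq_strong:
  assumes H: "validH v" and s: "strU t v" shows "\<not> clEq t v p"
proof
  assume c: "clEq t v p"
  have sh: "shU t v" using s unfolding strU_def by simp
  show False
  proof (cases "nN v")
    case nv: True
    have n0: "tN v 0 \<le> t - 1" "tN v (xU v - 1) \<le> t - 1" using s nv unfolding strU_def by auto
    have x1: "1 \<le> xU v" using shU_N(1)[OF sh nv] .
    show False
    proof (cases "fst p < 0")
      case True
      then have y: "0 \<le> snd p" "snd p < tN v 0" "tW v (snd p) = t" using c nv unfolding clEq_def by auto
      have "tW v (snd p) \<le> tW v (tN v 0 - 1)" using validH_mono[OF H] y by auto
      moreover have "tW v (tN v 0 - 1) = tN v 0" using validH_C[OF H nv, of "tN v 0 - 1"] by simp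
      ultimately show False using y n0 by simp
    next
      case False
      then have x: "0 \<le> fst p" "fst p < xU v" "tN v (fst p) = t" using c nv unfolding clEq_def by auto
      have "tN v (fst p) \<le> tN v (xU v - 1)" using validH_monoN[OF H nv] x by auto
      then show False using x n0 by simp
    qed
  next
    case nn: False
    have u: "tW v (uU v - 1) \<le> t - 1" using s nn unfolding strU_def by auto
    have y: "0 \<le> snd p" "snd p < uU v" "tW v (snd p) = t" using c nn unfolding clEq_def by auto
    have "tW v (snd p) \<le> tW v (uU v - 1)" using validH_mono[OF H] y by auto
    then show False using y u by simp
  qed
qed

lemma step_core:
  assumes V: "valid v" and s: "shU t v" and sl: "shU t (rfl v)"
    and mu: "0 \<le> mu" "mu \<le> capU t v" and ml: "0 \<le> ml" "ml \<le> capU t (rfl v)"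
    and du: "dueU t v \<longrightarrow> mu \<ge> 1" and dl: "dueU t (rfl v) \<longrightarrow> ml \<ge> 1"
  shows "valid (upd t mu ml v)"
    and "strU (t+1) (upd t mu ml v)" and "strU (t+1) (rfl (upd t mu ml v))"
    and "mu \<ge> 1 \<Longrightarrow> \<not> dueU (t+1) (upd t mu ml v)" and "ml \<ge> 1 \<Longrightarrow> \<not> dueU (t+1) (rfl (upd t mu ml v))"
    and "capU (t+1) (upd t mu ml v) \<le> capU t v + 2 - mu"
    and "capU (t+1) (rfl (upd t mu ml v)) \<le> capU t (rfl v) + 2 - ml"
    and "\<And>x y. dd (x,y) \<le> t - 1 \<Longrightarrow> inE (upd t mu ml v) (x,y) = inE v (x,y) \<and> wallNC (upd t mu ml v) (x,y) = wallNC v (x,y)"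
    and "\<And>x y. \<bar>x\<bar> + \<bar>y\<bar> = t \<Longrightarrow> wallNC (upd t mu ml v) (x,y) \<Longrightarrow>
          (x,y) \<in> newU t mu v \<or> (x,y) \<in> rp ` newU t ml (rfl v) \<or> clEq t v (x,y) \<or> clEq t (rfl v) (x,-y)"
proof -
  define v1 where "v1 = updU t mu v"
  define v2 where "v2 = updU t ml (rfl v1)"
  have v': "upd t mu ml v = rfl v2" unfolding upd_def v1_def v2_def by simp
  have H: "validH v" and HL: "validH (rfl v)" using V unfolding valid_def by auto
  have e1: "eqU (rfl v1) (rfl v)" unfolding v1_def by (rule updU_low[OF s])
  have sl1: "shU t (rfl v1)" using eqU_shU[OF e1] sl by simp
  have e2: "eqU (rfl v2) v1" using updU_low[OF sl1, of ml] unfolding v2_def by simp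
  have HL1: "validH (rfl v1)" using eqU_validH[OF e1] HL by simp
  have ml1: "ml \<le> capU t (rfl v1)" using eqU_capU[OF e1] ml by simp
  have dl1: "dueU t (rfl v1) \<longrightarrow> ml \<ge> 1" using eqU_dueU[OF sl eqU_sym[OF e1]] dl by simp
  have H1: "validH v1" unfolding v1_def by (rule validH_upd[OF H s mu(2)])
  have H2: "validH v2" unfolding v2_def by (rule validH_upd[OF HL1 sl1 ml1])
  have U1: "strU (t+1) v1 \<and> (mu \<ge> 1 \<longrightarrow> \<not> dueU (t+1) v1) \<and> capU (t+1) v1 \<le> capU t v + 2 - mu"
    unfolding v1_def by (rule sh_upd[OF H s mu du])
  have U2: "strU (t+1) v2 \<and> (ml \<ge> 1 \<longrightarrow> \<not> dueU (t+1) v2) \<and> capU (t+1) v2 \<le> capU t (rfl v1) + 2 - ml"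
    unfolding v2_def by (rule sh_upd[OF HL1 sl1 ml(1) ml1 dl1])
  show "valid (upd t mu ml v)" unfolding v' valid_def using H2 eqU_validH[OF e2] H1 by simp
  show "strU (t+1) (upd t mu ml v)" unfolding v' using eqU_strU[OF e2] U1 by simp
  show "strU (t+1) (rfl (upd t mu ml v))" unfolding v' using U2 by simp
  show "mu \<ge> 1 \<Longrightarrow> \<not> dueU (t+1) (upd t mu ml v)"
  proof -
    assume "mu \<ge> 1"
    have sh1: "shU (t+1) v1" using U1 unfolding strU_def by simp
    show ?thesis unfolding v' using eqU_dueU[OF sh1 eqU_sym[OF e2]] U1 \<open>mu \<ge> 1\<close> by simp
  qed
  show "ml \<ge> 1 \<Longrightarrow> \<not> dueU (t+1) (rfl (upd t mu ml v))" unfolding v' using U2 by simp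
  show "capU (t+1) (upd t mu ml v) \<le> capU t v + 2 - mu" unfolding v' using eqU_capU[OF e2] U1 by simp
  show "capU (t+1) (rfl (upd t mu ml v)) \<le> capU t (rfl v) + 2 - ml" unfolding v' using U2 eqU_capU[OF e1] by simp
  show "\<And>x y. dd (x,y) \<le> t - 1 \<Longrightarrow> inE (upd t mu ml v) (x,y) = inE v (x,y) \<and> wallNC (upd t mu ml v) (x,y) = wallNC v (x,y)"
  proof -
    fix x y assume d: "dd (x,y) \<le> t - 1"
    have d': "dd (x,-y) \<le> t - 1" using d by simp
    have a2: "inE v2 (x,-y) = inE (rfl v1) (x,-y) \<and> wallNC v2 (x,-y) = wallNC (rfl v1) (x,-y)"
      unfolding v2_def by (rule agree_upd[OF HL1 sl1 ml1 d'])
    have a1: "inE v1 (x,y) = inE v (x,y) \<and> wallNC v1 (x,y) = wallNC v (x,y)"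
      unfolding v1_def by (rule agree_upd[OF H s mu(2) d])
    show "inE (upd t mu ml v) (x,y) = inE v (x,y) \<and> wallNC (upd t mu ml v) (x,y) = wallNC v (x,y)"
      unfolding v' using a1 a2 by (simp add: inE_rfl wallNC_rfl del: inE.simps wallNC.simps)
  qed
  show "\<And>x y. \<bar>x\<bar> + \<bar>y\<bar> = t \<Longrightarrow> wallNC (upd t mu ml v) (x,y) \<Longrightarrow>
          (x,y) \<in> newU t mu v \<or> (x,y) \<in> rp ` newU t ml (rfl v) \<or> clEq t v (x,y) \<or> clEq t (rfl v) (x,-y)"
  proof -
    fix x y assume p: "\<bar>x\<bar> + \<bar>y\<bar> = t" and w: "wallNC (upd t mu ml v) (x,y)"
    have w2: "wallNC v2 (x,-y)" using w unfolding v' by (simp add: wallNC_rfl del: wallNC.simps)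
    show "(x,y) \<in> newU t mu v \<or> (x,y) \<in> rp ` newU t ml (rfl v) \<or> clEq t v (x,y) \<or> clEq t (rfl v) (x,-y)"
    proof (cases "y > 0 \<or> (y = 0 \<and> x < 0)")
      case True
      have "wallNC (rfl v2) (x,y) = wallNC v1 (x,y)"
        by (rule wallNC_eqU_up[OF e2]) (use H2 HL1 True in auto)
      then have "wallNC v1 (x,y)" using w unfolding v' by simp
      then show ?thesis using newwall_upd[OF H s mu du p True] unfolding v1_def by blast
    next
      case False
      show ?thesis
      proof (cases "y < 0")
        case True
        have p': "\<bar>x\<bar> + \<bar>-y\<bar> = t" using p by simp
        have "(x,-y) \<in> newU t ml (rfl v1) \<or> clEq t (rfl v1) (x,-y)"
          using newwall_upd[OF HL1 sl1 ml(1) ml1 dl1 p' _ w2[unfolded v2_def]] True by simp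
        then have "(x,-y) \<in> newU t ml (rfl v) \<or> clEq t (rfl v) (x,-y)"
          using eqU_newU[OF e1] eqU_clEq[OF e1] by simp
        moreover have "(x,y) = rp (x,-y)" by simp
        ultimately show ?thesis by force
      next
        case False2: False
        then have "y = 0" "x \<ge> 0" using False by auto
        then show ?thesis using w by (simp add: capW_def)
      qed
    qed
  qed
qed


definition Xs :: "vs \<Rightarrow> int \<Rightarrow> (int \<times> int) set" where
"Xs v t = {q. dd q = t \<and> (\<not> inE v q \<or> wallNC v q)}"

definition piecesU :: "int \<Rightarrow> vs \<Rightarrow> (int \<times> int) set" where
"piecesU t v = (if nN v then (\<lambda>x. (x, t - x)) ` {xU v..<t}
   else (\<lambda>y. (y - t, y)) ` {uU v..<t} \<union> (\<lambda>x. (x, t - x)) ` {0..<t})"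

definition Gv :: "vs \<Rightarrow> int \<Rightarrow> int" where
"Gv v t = capU t v + capU t (rfl v) + 1"

lemma strU_bounds:
  assumes H: "validH v" and s: "strU t v"
  shows "\<not> nN v \<Longrightarrow> uU v \<le> t - 1" "nN v \<Longrightarrow> xU v \<le> t - 1"
proof -
  have sh: "shU t v" using s unfolding strU_def by simp
  show "\<not> nN v \<Longrightarrow> uU v \<le> t - 1"
  proof -
    assume nn: "\<not> nN v"
    have "tW v (uU v - 1) \<le> t - 1" using s nn unfolding strU_def by simp
    moreover have "tW v (uU v - 1) \<ge> uU v" using validH_W[OF H, of "uU v - 1"] shU_W(1)[OF sh nn] by simp
    ultimately show ?thesis by simp
  qed
  show "nN v \<Longrightarrow> xU v \<le> t - 1"
  proof -
    assume nv: "nN v"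
    have "tN v (xU v - 1) \<le> t - 1" using s nv unfolding strU_def by simp
    moreover have "tN v (xU v - 1) \<ge> xU v" using validH_N[OF H nv, of "xU v - 1"] shU_N(1)[OF sh nv] by simp
    ultimately show ?thesis by simp
  qed
qed

lemma card_piecesU:
  assumes H: "validH v" and s: "strU t v" and t: "t \<ge> 1"
  shows "finite (piecesU t v) \<and> int (card (piecesU t v)) \<le> capU t v"
proof (cases "nN v")
  case True
  have "int (card ((\<lambda>x. (x, t - x)) ` {xU v..<t})) \<le> t - xU v"
    using card_img_int[of "\<lambda>x. (x, t - x)" "xU v" t] strU_bounds(2)[OF H s True] by simp
  then show ?thesis unfolding piecesU_def capU_def using True by simp
next
  case False
  have c1: "int (card ((\<lambda>y. (y - t, y)) ` {uU v..<t})) \<le> t - uU v"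
    using card_img_int[of "\<lambda>y. (y - t, y)" "uU v" t] strU_bounds(1)[OF H s False] by simp
  have c2: "int (card ((\<lambda>x. (x, t - x)) ` {0..<t})) \<le> t"
    using card_img_int[of "\<lambda>x. (x, t - x)" 0 t] t by simp
  have "card ((\<lambda>y. (y - t, y)) ` {uU v..<t} \<union> (\<lambda>x. (x, t - x)) ` {0..<t})
      \<le> card ((\<lambda>y. (y - t, y)) ` {uU v..<t}) + card ((\<lambda>x. (x, t - x)) ` {0..<t})"
    by (rule card_Un_le)
  then show ?thesis unfolding piecesU_def capU_def using False c1 c2 by simp
qed

lemma X_up:
  assumes H: "validH v" and s: "strU t v" and p: "\<bar>x\<bar> + \<bar>y\<bar> = t"
    and up: "y > 0 \<or> (y = 0 \<and> x < 0)" and X: "\<not> inE v (x,y) \<or> wallNC v (x,y)"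
  shows "(x,y) \<in> piecesU t v"
proof -
  have sh: "shU t v" using s unfolding strU_def by simp
  have y0: "y \<ge> 0" using up by auto
  show ?thesis
  proof (cases "x < 0")
    case xn: True
    have pW: "-x + y = t" using p xn y0 by simp
    have yt: "y \<le> t - 1" using pW xn by simp
    show ?thesis
    proof (cases "nN v")
      case nv: True
      show ?thesis
      proof (cases "y < tN v 0")
        case True
        have "tW v y \<le> tW v (tN v 0 - 1)" using validH_mono[OF H] y0 True by auto
        moreover have "tW v (tN v 0 - 1) = tN v 0" using validH_C[OF H nv, of "tN v 0 - 1"] by simp
        moreover have "tN v 0 \<le> t - 1" using s nv unfolding strU_def by simp
        ultimately have "tW v y \<le> t - 1" by simp
        then have "inE v (x,y) \<and> \<not> wallNC v (x,y)" using xn pW y0 by auto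
        then show ?thesis using X by blast
      next
        case False
        then have "tW v y = y + 1" using validH_C[OF H nv] by simp
        then have "inE v (x,y)" using xn pW y0 yt by simp
        moreover have "capW v y" unfolding capW_def using nv False by simp
        ultimately have "inE v (x,y) \<and> \<not> wallNC v (x,y)" using xn y0 by auto
        then show ?thesis using X by blast
      qed
    next
      case nn: False
      show ?thesis
      proof (cases "y < uU v")
        case True
        have "tW v y \<le> tW v (uU v - 1)" using validH_mono[OF H] y0 True by auto
        moreover have "tW v (uU v - 1) \<le> t - 1" using s nn unfolding strU_def by simp
        ultimately have "tW v y \<le> t - 1" by simp
        then have "inE v (x,y) \<and> \<not> wallNC v (x,y)" using xn pW y0 by auto
        then show ?thesis using X by blast
      next
        case False
        have "x = y - t" using pW by simp
        then have "(x,y) \<in> (\<lambda>y. (y - t, y)) ` {uU v..<t}" using False yt by auto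
        then show ?thesis unfolding piecesU_def using nn by simp
      qed
    qed
  next
    case xp: False
    then have yp: "y > 0" using up by auto
    have pN: "x + y = t" using p xp yp by simp
    have xt: "x \<le> t - 1" "x \<ge> 0" using pN yp xp by auto
    show ?thesis
    proof (cases "nN v")
      case nv: True
      show ?thesis
      proof (cases "x < xU v")
        case True
        have "tN v x \<le> tN v (xU v - 1)" using validH_monoN[OF H nv] xt True by auto
        moreover have "tN v (xU v - 1) \<le> t - 1" using s nv unfolding strU_def by simp
        ultimately have "tN v x \<le> t - 1" by simp
        then have "inE v (x,y) \<and> \<not> wallNC v (x,y)" using xp pN yp nv by auto
        then show ?thesis using X by blast
      next
        case False
        have "y = t - x" using pN by simp
        then have "(x,y) \<in> (\<lambda>x. (x, t - x)) ` {xU v..<t}" using False xt by auto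
        then show ?thesis unfolding piecesU_def using nv by simp
      qed
    next
      case nn: False
      have "y = t - x" using pN by simp
      then have "(x,y) \<in> (\<lambda>x. (x, t - x)) ` {0..<t}" using xt by auto
      then show ?thesis unfolding piecesU_def using nn by simp
    qed
  qed
qed

lemma X_sub:
  assumes V: "valid v" and s: "strU t v" and sl: "strU t (rfl v)"
  shows "Xs v t \<subseteq> piecesU t v \<union> rp ` piecesU t (rfl v) \<union> {(t,0)}"
proof
  fix q assume q: "q \<in> Xs v t"
  obtain x y where qe: "q = (x,y)" by (cases q)
  have H: "validH v" and HL: "validH (rfl v)" using V unfolding valid_def by auto
  have p: "\<bar>x\<bar> + \<bar>y\<bar> = t" and X: "\<not> inE v (x,y) \<or> wallNC v (x,y)" using q qe unfolding Xs_def by auto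
  show "q \<in> piecesU t v \<union> rp ` piecesU t (rfl v) \<union> {(t,0)}"
  proof (cases "y > 0 \<or> (y = 0 \<and> x < 0)")
    case True then show ?thesis using X_up[OF H s p True X] qe by simp
  next
    case False
    show ?thesis
    proof (cases "y < 0")
      case True
      have X': "\<not> inE (rfl v) (x,-y) \<or> wallNC (rfl v) (x,-y)" using X
        by (simp add: inE_rfl wallNC_rfl del: inE.simps wallNC.simps)
      have "(x,-y) \<in> piecesU t (rfl v)" using X_up[OF HL sl _ _ X'] p True by simp
      moreover have "q = rp (x,-y)" using qe by simp
      ultimately show ?thesis by blast
    next
      case False2: False
      then have "y = 0" "x \<ge> 0" using False by auto
      then show ?thesis using qe p by simp
    qed
  qed
qed

lemma card_X:
  assumes V: "valid v" and s: "strU t v" and sl: "strU t (rfl v)" and t: "t \<ge> 1"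
  shows "finite (Xs v t) \<and> int (card (Xs v t)) \<le> Gv v t"
proof -
  have H: "validH v" and HL: "validH (rfl v)" using V unfolding valid_def by auto
  have c1: "finite (piecesU t v) \<and> int (card (piecesU t v)) \<le> capU t v" by (rule card_piecesU[OF H s t])
  have c2: "finite (piecesU t (rfl v)) \<and> int (card (piecesU t (rfl v))) \<le> capU t (rfl v)" by (rule card_piecesU[OF HL sl t])
  have c3: "card (rp ` piecesU t (rfl v)) \<le> card (piecesU t (rfl v))" by (rule card_image_le) (use c2 in simp)
  let ?A = "piecesU t v \<union> rp ` piecesU t (rfl v) \<union> {(t,0)}"
  have fA: "finite ?A" using c1 c2 by simp
  have "card ?A \<le> card (piecesU t v \<union> rp ` piecesU t (rfl v)) + card {(t,0::int)}" by (rule card_Un_le)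
  moreover have "card (piecesU t v \<union> rp ` piecesU t (rfl v)) \<le> card (piecesU t v) + card (rp ` piecesU t (rfl v))"
    by (rule card_Un_le)
  ultimately have cA: "int (card ?A) \<le> Gv v t" using c1 c2 c3 unfolding Gv_def by simp
  have sub: "Xs v t \<subseteq> ?A" by (rule X_sub[OF V s sl])
  have "card (Xs v t) \<le> card ?A" by (rule card_mono[OF fA sub])
  then show ?thesis using cA finite_subset[OF sub fA] by simp
qed


definition PV :: "vs \<Rightarrow> int \<Rightarrow> (int \<times> int) set" where
"PV v d = {p. wallNC v p \<and> dd p \<le> d}"

definition chU :: "int \<Rightarrow> vs \<Rightarrow> int \<Rightarrow> int" where
"chU t v k = (if k \<le> 1 then (if dueU t (rfl v) \<and> \<not> dueU t v then 0 else k) else min (capU t v) (k - 1))"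

lemma chU_ok:
  assumes k: "0 \<le> k" "k \<le> capU t v + capU t (rfl v)" and c: "capU t v \<ge> 1" "capU t (rfl v) \<ge> 1"
    and nb: "\<not> (dueU t v \<and> dueU t (rfl v))" and k0: "dueU t v \<or> dueU t (rfl v) \<longrightarrow> k \<ge> 1"
  shows "0 \<le> chU t v k" "chU t v k \<le> capU t v" "0 \<le> k - chU t v k" "k - chU t v k \<le> capU t (rfl v)"
    "dueU t v \<Longrightarrow> chU t v k \<ge> 1" "dueU t (rfl v) \<Longrightarrow> k - chU t v k \<ge> 1"
    "k \<ge> 1 \<Longrightarrow> chU t v k \<ge> 1 \<or> k - chU t v k \<ge> 1"
  using assms unfolding chU_def by (auto split: if_splits)

definition v0 :: "int \<Rightarrow> vs" where
"v0 t = \<lparr>tW = (\<lambda>y. t + 2 * \<bar>y\<bar>), nN = False, tN = (\<lambda>x. 0), nS = False, tS = (\<lambda>x. 0),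
         uU = 1, xU = 0, uL = 1, xL = 0\<rparr>"

lemma v0_simps[simp]: "tW (v0 t) y = t + 2 * \<bar>y\<bar>" "nN (v0 t) = False" "nS (v0 t) = False"
  "uU (v0 t) = 1" "uL (v0 t) = 1" "tN (v0 t) = (\<lambda>x. 0)" "tS (v0 t) = (\<lambda>x. 0)" "xU (v0 t) = 0" "xL (v0 t) = 0"
  by (simp_all add: v0_def)

lemma rfl_v0[simp]: "rfl (v0 t) = v0 t"
  unfolding rfl_def v0_def by simp

lemma valid_v0: "t \<ge> 1 \<Longrightarrow> valid (v0 t)"
  unfolding valid_def validH_def by auto

lemma shU_v0: "t \<ge> 1 \<Longrightarrow> shU t (v0 t)"
  by (rule shU_I) auto

lemma dueU_v0: "\<not> dueU t (v0 t)" "\<not> dueU (t+1) (v0 t)"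
  unfolding dueU_def by auto

lemma capU_v0: "capU t (v0 t) = 2*t - 1"
  unfolding capU_def by simp

lemma inE_v0: "inE (v0 t) p \<Longrightarrow> dd p \<ge> t"
  by (cases p) auto

lemma wallNC_v0: "wallNC (v0 t) p \<Longrightarrow> dd p \<ge> t"
  by (cases p) auto

lemma PV_v0: "PV (v0 t) (t - 1) = {}"
  unfolding PV_def using wallNC_v0 by fastforce

lemma S_sub:
  assumes V: "valid v" and s: "shU t v" and sl: "shU t (rfl v)"
    and mu: "0 \<le> mu" "mu \<le> capU t v" and ml: "0 \<le> ml" "ml \<le> capU t (rfl v)"
    and du: "dueU t v \<longrightarrow> mu \<ge> 1" and dl: "dueU t (rfl v) \<longrightarrow> ml \<ge> 1"
  shows "PV (upd t mu ml v) t - PV v (t-1) \<subseteq> newU t mu v \<union> rp ` newU t ml (rfl v)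
           \<union> {p. dd p = t \<and> (clEq t v p \<or> clEq t (rfl v) (rp p))}"
proof
  fix p assume p: "p \<in> PV (upd t mu ml v) t - PV v (t-1)"
  obtain x y where pe: "p = (x,y)" by (cases p)
  have w: "wallNC (upd t mu ml v) (x,y)" and d: "dd (x,y) \<le> t" and n: "\<not> (wallNC v (x,y) \<and> dd (x,y) \<le> t - 1)"
    using p pe unfolding PV_def by auto
  have dt: "dd (x,y) = t"
  proof (rule ccontr)
    assume "dd (x,y) \<noteq> t"
    then have d1: "dd (x,y) \<le> t - 1" using d by simp
    then have "wallNC v (x,y)" using step_core(8)[OF V s sl mu ml du dl d1] w by simp
    then show False using n d1 by simp
  qed
  then have "\<bar>x\<bar> + \<bar>y\<bar> = t" by simp
  from step_core(9)[OF V s sl mu ml du dl this w]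
  show "p \<in> newU t mu v \<union> rp ` newU t ml (rfl v) \<union> {p. dd p = t \<and> (clEq t v p \<or> clEq t (rfl v) (rp p))}"
    using pe dt by auto
qed

lemma card_S:
  assumes V: "valid v" and s: "shU t v" and sl: "shU t (rfl v)"
    and mu: "0 \<le> mu" "mu \<le> capU t v" and ml: "0 \<le> ml" "ml \<le> capU t (rfl v)"
    and du: "dueU t v \<longrightarrow> mu \<ge> 1" and dl: "dueU t (rfl v) \<longrightarrow> ml \<ge> 1"
    and cl: "{p. dd p = t \<and> (clEq t v p \<or> clEq t (rfl v) (rp p))} \<subseteq> Q" and fQ: "finite Q"
  shows "finite (PV (upd t mu ml v) t - PV v (t-1)) \<and> int (card (PV (upd t mu ml v) t - PV v (t-1))) \<le> mu + ml + int (card Q)"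
proof -
  have H: "validH v" and HL: "validH (rfl v)" using V unfolding valid_def by auto
  have c1: "finite (newU t mu v) \<and> int (card (newU t mu v)) \<le> mu" by (rule card_newU[OF s mu])
  have c2: "finite (newU t ml (rfl v)) \<and> int (card (newU t ml (rfl v))) \<le> ml" by (rule card_newU[OF sl ml])
  have c3: "card (rp ` newU t ml (rfl v)) \<le> card (newU t ml (rfl v))" by (rule card_image_le) (use c2 in simp)
  let ?A = "newU t mu v \<union> rp ` newU t ml (rfl v) \<union> Q"
  have sub: "PV (upd t mu ml v) t - PV v (t-1) \<subseteq> ?A" using S_sub[OF V s sl mu ml du dl] cl by blast
  have fA: "finite ?A" using c1 c2 fQ by simp
  have "card ?A \<le> card (newU t mu v \<union> rp ` newU t ml (rfl v)) + card Q" by (rule card_Un_le)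
  moreover have "card (newU t mu v \<union> rp ` newU t ml (rfl v)) \<le> card (newU t mu v) + card (rp ` newU t ml (rfl v))"
    by (rule card_Un_le)
  ultimately have "int (card ?A) \<le> mu + ml + int (card Q)" using c1 c2 c3 by linarith
  moreover have "card (PV (upd t mu ml v) t - PV v (t-1)) \<le> card ?A" by (rule card_mono[OF fA sub])
  ultimately show ?thesis using finite_subset[OF sub fA] by linarith
qed

lemma clEq_v0: "{p. dd p = t \<and> (clEq t (v0 t) p \<or> clEq t (rfl (v0 t)) (rp p))} \<subseteq> {(-t, 0)}"
proof
  fix p assume "p \<in> {p. dd p = t \<and> (clEq t (v0 t) p \<or> clEq t (rfl (v0 t)) (rp p))}"
  then obtain x y where pe: "p = (x,y)" and d: "\<bar>x\<bar> + \<bar>y\<bar> = t" and c: "clEq t (v0 t) (x,y) \<or> clEq t (v0 t) (x,-y)"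
    by (cases p) auto
  then have "x < 0" "y = 0" unfolding clEq_def by auto
  then show "p \<in> {(-t,0)}" using pe d by auto
qed

lemma clEq_run:
  assumes V: "valid v" and s: "strU t v" and sl: "strU t (rfl v)"
  shows "{p. dd p = t \<and> (clEq t v p \<or> clEq t (rfl v) (rp p))} \<subseteq> {}"
  using clEq_strong[of v t] clEq_strong[of "rfl v" t] V s sl unfolding valid_def by auto


lemma adj_grid: "adj = grid_adj"
  by (auto simp: adj_def grid_adj_def fun_eq_iff)

lemma grid_adj_sym: "grid_adj u w \<Longrightarrow> grid_adj w u"
  unfolding grid_adj_def by (simp add: abs_minus_commute)

lemma grid_adj_dd: "grid_adj u w \<Longrightarrow> dd w \<le> dd u + 1"
proof -
  assume a: "grid_adj u w"
  obtain a1 a2 b1 b2 where u: "u = (a1,a2)" and w: "w = (b1,b2)" by (cases u, cases w)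
  have "\<bar>a1 - b1\<bar> + \<bar>a2 - b2\<bar> = 1" using a u w unfolding grid_adj_def by simp
  then show ?thesis using u w by simp
qed

definition nxt :: "(int \<times> int) set \<Rightarrow> (int \<times> int) set \<Rightarrow> (int \<times> int) set" where
"nxt B P = B \<union> {w. w \<notin> P \<and> (\<exists>u\<in>B. grid_adj u w)}"

lemma seal:
  assumes V: "valid v" and B: "\<forall>p\<in>B. dd p \<le> te - 1 \<and> \<not> inE v p" and P: "PV v (te - 1) \<union> Xs v te \<subseteq> P"
  shows "\<forall>p\<in>nxt B P. dd p \<le> te - 1 \<and> \<not> inE v p"
proof
  fix w assume "w \<in> nxt B P"
  then consider "w \<in> B" | "w \<notin> P" "\<exists>u\<in>B. grid_adj u w" unfolding nxt_def by blast
  then show "dd w \<le> te - 1 \<and> \<not> inE v w"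
  proof cases
    case 1 then show ?thesis using B by blast
  next
    case 2
    then obtain u where u: "u \<in> B" "grid_adj u w" by blast
    have du: "dd u \<le> te - 1" "\<not> inE v u" using B u by auto
    have dw: "dd w \<le> te" using grid_adj_dd[OF u(2)] du by simp
    have nw: "\<not> inE v w"
    proof
      assume e: "inE v w"
      have "wallNC v w" by (rule inner[OF V e _ du(2)]) (use grid_adj_sym[OF u(2)] adj_grid in simp)
      then have "w \<in> PV v (te - 1) \<union> Xs v te" unfolding PV_def Xs_def using dw by auto
      then show False using P 2 by blast
    qed
    have "dd w \<noteq> te"
    proof
      assume "dd w = te"
      then have "w \<in> Xs v te" unfolding Xs_def using nw by simp
      then show False using P 2 by blast
    qed
    then show ?thesis using dw nw by simp
  qed
qed

definition invR :: "vs \<Rightarrow> int \<Rightarrow> (int \<times> int) set \<Rightarrow> (int \<times> int) set \<Rightarrow> int \<Rightarrow> bool" where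
"invR v t B P T \<longleftrightarrow> valid v \<and> strU t v \<and> strU t (rfl v) \<and> \<not> (dueU t v \<and> dueU t (rfl v)) \<and> P = PV v (t-1)
   \<and> (\<forall>p\<in>B. dd p \<le> t - 1 \<and> \<not> inE v p) \<and> Gv v t + T \<le> 4*t \<and> t \<ge> 1"

definition invD :: "vs \<Rightarrow> int \<Rightarrow> (int \<times> int) set \<Rightarrow> (int \<times> int) set \<Rightarrow> bool" where
"invD v te B P \<longleftrightarrow> valid v \<and> (\<forall>p\<in>B. dd p \<le> te - 1 \<and> \<not> inE v p) \<and> PV v (te - 1) \<union> Xs v te \<subseteq> P"

lemma trans_end:
  assumes V: "valid v" and B: "\<forall>p\<in>B. dd p \<le> t - 1 \<and> \<not> inE v p" and P: "P = PV v (t-1)"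
  shows "Xs v t \<inter> (B \<union> P) = {}" "invD v t (nxt B (P \<union> Xs v t)) (P \<union> Xs v t)"
proof -
  show "Xs v t \<inter> (B \<union> P) = {}" using B P unfolding Xs_def PV_def by fastforce
  have P': "PV v (t - 1) \<union> Xs v t \<subseteq> P \<union> Xs v t" using P by simp
  show "invD v t (nxt B (P \<union> Xs v t)) (P \<union> Xs v t)"
    unfolding invD_def using V seal[OF V B P'] P' by simp
qed

lemma trans_done:
  assumes "invD v te B P" "P \<subseteq> P'"
  shows "invD v te (nxt B P') P'"
  using assms seal unfolding invD_def by blast

definition kstep :: "int \<Rightarrow> vs \<Rightarrow> int \<Rightarrow> vs" where
"kstep t v k = upd t (chU t v k) (k - chU t v k) v"

lemma trans_k:
  assumes V: "valid v" and s: "shU t v" and sl: "shU t (rfl v)"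
    and B: "\<forall>p\<in>B. dd p \<le> t - 1 \<and> \<not> inE v p" and P: "P = PV v (t-1)" and t: "t \<ge> 1"
    and k: "0 \<le> k" "k \<le> capU t v + capU t (rfl v)" and c: "capU t v \<ge> 1" "capU t (rfl v) \<ge> 1"
    and nb: "\<not> (dueU t v \<and> dueU t (rfl v))" and k0: "dueU t v \<or> dueU t (rfl v) \<longrightarrow> k \<ge> 1"
    and kz: "k = 0 \<longrightarrow> \<not> dueU (t+1) v"
    and cl: "{p. dd p = t \<and> (clEq t v p \<or> clEq t (rfl v) (rp p))} \<subseteq> Q" and fQ: "finite Q"
    and x: "k + int (card Q) \<le> x" and G: "Gv v t + T + (x - k) \<le> 4*t"
  defines "mv \<equiv> PV (kstep t v k) t - PV v (t-1)"
  shows "finite mv" "int (card mv) \<le> x" "mv \<inter> (B \<union> P) = {}"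
    "invR (kstep t v k) (t+1) (nxt B (P \<union> mv)) (P \<union> mv) (T + x)"
proof -
  define mu where "mu = chU t v k"
  define ml where "ml = k - mu"
  note ch = chU_ok[OF k c nb k0, folded mu_def, folded ml_def]
  have kv: "kstep t v k = upd t mu ml v" unfolding kstep_def mu_def ml_def by simp
  have du: "dueU t v \<longrightarrow> mu \<ge> 1" using ch(5) by blast
  have dl: "dueU t (rfl v) \<longrightarrow> ml \<ge> 1" using ch(6) by blast
  have m1: "0 \<le> mu" "mu \<le> capU t v" "0 \<le> ml" "ml \<le> capU t (rfl v)" using ch(1-4) by auto
  note core = step_core[OF V s sl m1(1,2) m1(3,4) du dl]
  note cS = card_S[OF V s sl m1(1,2) m1(3,4) du dl cl fQ]
  show "finite mv" using cS unfolding mv_def kv by simp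
  show "int (card mv) \<le> x" using cS x unfolding mv_def kv ml_def by simp
  have mvt: "\<And>p. p \<in> mv \<Longrightarrow> dd p = t"
  proof -
    fix p assume p: "p \<in> mv"
    obtain a b where pe: "p = (a,b)" by (cases p)
    have w: "wallNC (upd t mu ml v) (a,b)" "dd (a,b) \<le> t" "\<not> (wallNC v (a,b) \<and> dd (a,b) \<le> t - 1)"
      using p pe unfolding mv_def kv PV_def by auto
    show "dd p = t"
    proof (rule ccontr)
      assume "dd p \<noteq> t"
      then have d1: "dd (a,b) \<le> t - 1" using w pe by simp
      then show False using core(8)[OF d1] w by simp
    qed
  qed
  show "mv \<inter> (B \<union> P) = {}"
  proof -
    have "mv \<inter> B = {}" using mvt B by fastforce
    moreover have "mv \<inter> P = {}" unfolding mv_def P by blast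
    ultimately show ?thesis by blast
  qed
  have sub: "PV v (t - 1) \<subseteq> PV (upd t mu ml v) t"
  proof
    fix p assume p: "p \<in> PV v (t - 1)"
    obtain a b where pe: "p = (a,b)" by (cases p)
    have "wallNC v (a,b)" "dd (a,b) \<le> t - 1" using p pe unfolding PV_def by auto
    then show "p \<in> PV (upd t mu ml v) t" using core(8) pe unfolding PV_def by auto
  qed
  have P': "P \<union> mv = PV (kstep t v k) t" unfolding mv_def P kv using sub by blast
  have V': "valid (kstep t v k)" using core(1) kv by simp
  have B': "\<forall>p\<in>nxt B (P \<union> mv). dd p \<le> t + 1 - 1 \<and> \<not> inE (kstep t v k) p"
  proof
    fix w assume "w \<in> nxt B (P \<union> mv)"
    then consider "w \<in> B" | "w \<notin> P \<union> mv" "\<exists>u\<in>B. grid_adj u w" unfolding nxt_def by blast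
    then show "dd w \<le> t + 1 - 1 \<and> \<not> inE (kstep t v k) w"
    proof cases
      case 1
      obtain a b where we: "w = (a,b)" by (cases w)
      have "dd (a,b) \<le> t - 1" "\<not> inE v (a,b)" using B 1 we by auto
      then show ?thesis using core(8) we kv by auto
    next
      case 2
      then obtain u where u: "u \<in> B" "grid_adj u w" by blast
      obtain a b where ue: "u = (a,b)" by (cases u)
      have du: "dd (a,b) \<le> t - 1" "\<not> inE v (a,b)" using B u ue by auto
      have nu: "\<not> inE (kstep t v k) u" using core(8)[OF du(1)] du(2) ue kv by simp
      have dw: "dd w \<le> t" using grid_adj_dd[OF u(2)] du ue by simp
      have "\<not> inE (kstep t v k) w"
      proof
        assume e: "inE (kstep t v k) w"
        have "wallNC (kstep t v k) w" by (rule inner[OF V' e _ nu]) (use grid_adj_sym[OF u(2)] adj_grid in simp)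
        then have "w \<in> PV (kstep t v k) t" unfolding PV_def using dw by simp
        then show False using 2 P' by blast
      qed
      then show ?thesis using dw by simp
    qed
  qed
  have nd: "\<not> (dueU (t+1) (kstep t v k) \<and> dueU (t+1) (rfl (kstep t v k)))"
  proof (cases "k \<ge> 1")
    case True
    then show ?thesis using ch(7) core(4,5) kv by auto
  next
    case False
    then have "k = 0" "mu = 0" "ml = 0" using ch(1,3) k ml_def by auto
    then have "kstep t v k = v" using kv unfolding upd_def by simp
    then show ?thesis using kz \<open>k = 0\<close> by simp
  qed
  have G': "Gv (kstep t v k) (t+1) + (T + x) \<le> 4*(t+1)"
    using core(6,7) G kv unfolding Gv_def ml_def by simp
  show "invR (kstep t v k) (t+1) (nxt B (P \<union> mv)) (P \<union> mv) (T + x)"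
    unfolding invR_def using V' core(2,3) kv nd P' B' G' t by simp
qed



lemma Gv_v0: "Gv (v0 t) t = 4*t - 1"
  unfolding Gv_def capU_def by simp

lemma card_X0:
  assumes t: "t \<ge> 1"
  shows "finite (Xs (v0 t) t) \<and> int (card (Xs (v0 t) t)) \<le> 4*t"
proof -
  let ?R = "(\<lambda>y. (y - t, y)) ` {1..<t} \<union> (\<lambda>x. (x, t - x)) ` {0..<t}"
  let ?A = "?R \<union> rp ` ?R \<union> {(t,0), (-t,0)}"
  have sub: "Xs (v0 t) t \<subseteq> ?A"
  proof
    fix q assume q: "q \<in> Xs (v0 t) t"
    obtain x y where qe: "q = (x,y)" by (cases q)
    have p: "\<bar>x\<bar> + \<bar>y\<bar> = t" using q qe unfolding Xs_def by simp
    have up: "\<And>x y. \<bar>x\<bar> + \<bar>y\<bar> = t \<Longrightarrow> y > 0 \<Longrightarrow> (x,y) \<in> ?R"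
    proof -
      fix x y assume p: "\<bar>x\<bar> + \<bar>y\<bar> = t" and y: "y > 0"
      show "(x,y) \<in> ?R"
      proof (cases "x < 0")
        case True
        then have "x = y - t" "1 \<le> y" "y < t" using p y by auto
        then show ?thesis by auto
      next
        case False
        then have "y = t - x" "0 \<le> x" "x < t" using p y by auto
        then show ?thesis by auto
      qed
    qed
    show "q \<in> ?A"
    proof (cases "y > 0")
      case True then show ?thesis using up[OF p] qe by simp
    next
      case False
      show ?thesis
      proof (cases "y < 0")
        case True
        have "(x,-y) \<in> ?R" using up[of x "-y"] p True by simp
        moreover have "q = rp (x,-y)" using qe by simp
        ultimately show ?thesis by blast
      next
        case False2: False
        then have "y = 0" using False by simp
        then show ?thesis using p qe by (cases "x < 0") auto
      qed
    qed
  qed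
  have c1: "int (card ((\<lambda>y. (y - t, y)) ` {1..<t})) \<le> t - 1"
    using card_img_int[of "\<lambda>y. (y - t, y)" 1 t] t by simp
  have c2: "int (card ((\<lambda>x. (x, t - x)) ` {0..<t})) \<le> t"
    using card_img_int[of "\<lambda>x. (x, t - x)" 0 t] t by simp
  have cR: "card ?R \<le> card ((\<lambda>y. (y - t, y)) ` {1..<t}) + card ((\<lambda>x. (x, t - x)) ` {0..<t})" by (rule card_Un_le)
  have fR: "finite ?R" by simp
  have c3: "card (rp ` ?R) \<le> card ?R" by (rule card_image_le[OF fR])
  have c4: "card ?A \<le> card (?R \<union> rp ` ?R) + card {(t,0), (-t,0::int)}" by (rule card_Un_le)
  have c5: "card (?R \<union> rp ` ?R) \<le> card ?R + card (rp ` ?R)" by (rule card_Un_le)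
  have c6: "card {(t,0), (-t,0::int)} \<le> 2" by (rule order_trans[OF card_insert_le_m1]) auto
  have fA: "finite ?A" by simp
  have "card (Xs (v0 t) t) \<le> card ?A" by (rule card_mono[OF fA sub])
  then show ?thesis using c1 c2 cR c3 c4 c5 c6 finite_subset[OF sub fA] by linarith
qed

section \<open>The strategy\<close>

datatype cst = Pre | Run vs | Done

fun stepc :: "nat \<Rightarrow> cst \<Rightarrow> nat \<Rightarrow> cst \<times> (int \<times> int) set" where
"stepc n Pre f = (if f = 0 then (Pre, {}) else
    (if card (Xs (v0 (int n)) (int n)) \<le> f then (Done, Xs (v0 (int n)) (int n))
     else (Run (kstep (int n) (v0 (int n)) (int f - 1)),
           PV (kstep (int n) (v0 (int n)) (int f - 1)) (int n) - PV (v0 (int n)) (int n - 1))))"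
| "stepc n (Run v) f = (if card (Xs v (int n)) \<le> f then (Done, Xs v (int n))
     else (Run (kstep (int n) v (int f)), PV (kstep (int n) v (int f)) (int n) - PV v (int n - 1)))"
| "stepc n Done f = (Done, {})"

fun runc :: "nat \<Rightarrow> cst \<Rightarrow> nat list \<Rightarrow> cst" where
"runc n s [] = s"
| "runc n s (f # fs) = runc (Suc n) (fst (stepc n s f)) fs"

definition sig0 :: "nat list \<Rightarrow> (int \<times> int) set" where
"sig0 xs = (if xs = [] then {} else snd (stepc (length xs) (runc 1 Pre (butlast xs)) (last xs)))"

lemma runc_snoc: "runc n s (xs @ [x]) = fst (stepc (n + length xs) (runc n s xs) x)"
  by (induction xs arbitrary: n s) auto

lemma revealed_Suc: "revealed f (Suc n) = revealed f n @ [f (Suc n)]"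
  unfolding revealed_def by simp

lemma length_revealed[simp]: "length (revealed f n) = n"
  unfolding revealed_def by simp

definition cs :: "(nat \<Rightarrow> nat) \<Rightarrow> nat \<Rightarrow> cst" where
"cs f n = runc 1 Pre (revealed f n)"

lemma cs_0: "cs f 0 = Pre"
  unfolding cs_def revealed_def by simp

lemma cs_Suc: "cs f (Suc n) = fst (stepc (Suc n) (cs f n) (f (Suc n)))"
  unfolding cs_def revealed_Suc runc_snoc by simp

lemma sig0_Suc: "sig0 (revealed f (Suc n)) = snd (stepc (Suc n) (cs f n) (f (Suc n)))"
  unfolding sig0_def cs_def revealed_Suc by simp

lemma gs_Suc: "game_state v s f (Suc n) =
   (nxt (fst (game_state v s f n)) (snd (game_state v s f n) \<union> s (revealed f (Suc n))),
    snd (game_state v s f n) \<union> s (revealed f (Suc n)))"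
  by (cases "game_state v s f n") (simp add: nxt_def)


section \<open>Game invariant\<close>

definition INV :: "(nat \<Rightarrow> nat) \<Rightarrow> nat \<Rightarrow> nat \<Rightarrow> bool" where
"INV f M n \<longleftrightarrow> (let B = fst (game_state (0,0) sig0 f n); P = snd (game_state (0,0) sig0 f n) in
   (cs f n = Pre \<and> P = {} \<and> (\<forall>p\<in>B. dd p \<le> int n) \<and> (\<Sum>i=1..n. f i) = 0)
 \<or> (\<exists>v. cs f n = Run v \<and> invR v (int n + 1) B P (int (\<Sum>i=1..n. f i)) \<and> M \<le> n)
 \<or> (cs f n = Done \<and> (\<exists>v te. invD v te B P)))"

lemma INV_0: "INV f M 0"
  unfolding INV_def using cs_0 by simp

lemma capU_pos:
  assumes H: "validH v" and s: "strU t v" shows "capU t v \<ge> 1"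
proof -
  have sh: "shU t v" using s unfolding strU_def by simp
  show ?thesis
  proof (cases "nN v")
    case True then show ?thesis using strU_bounds(2)[OF H s] unfolding capU_def by simp
  next
    case False then show ?thesis using strU_bounds(1)[OF H s] shU_W(1)[OF sh] unfolding capU_def by simp
  qed
qed

lemma INV_step:
  assumes hM: "\<forall>i\<ge>M. f i \<ge> 1" and h0: "\<forall>i. 1 \<le> i \<and> i < M \<longrightarrow> f i = 0" and I: "INV f M n"
  shows "INV f M (Suc n) \<and> legal_move (0,0) sig0 f (Suc n)"
proof -
  obtain B P where g: "game_state (0,0) sig0 f n = (B,P)" by fastforce
  define x where "x = f (Suc n)"
  define mv where "mv = snd (stepc (Suc n) (cs f n) x)"
  define T where "T = (\<Sum>i=1..n. f i)"
  define t where "t = int n + 1"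
  have tS: "int (Suc n) = t" unfolding t_def by simp
  have t1: "t \<ge> 1" unfolding t_def by simp
  have g': "game_state (0,0) sig0 f (Suc n) = (nxt B (P \<union> mv), P \<union> mv)"
    using gs_Suc[of "(0,0)" sig0 f n] sig0_Suc[of f n] g unfolding mv_def x_def by simp
  have cs': "cs f (Suc n) = fst (stepc (Suc n) (cs f n) x)" using cs_Suc x_def by simp
  have T': "(\<Sum>i=1..Suc n. f i) = T + x" unfolding T_def x_def by simp
  have L: "legal_move (0,0) sig0 f (Suc n) \<longleftrightarrow> finite mv \<and> card mv \<le> x \<and> mv \<inter> (B \<union> P) = {}"
    unfolding legal_move_def using g sig0_Suc[of f n] unfolding mv_def x_def by (simp add: Let_def)
  have I': "(cs f n = Pre \<and> P = {} \<and> (\<forall>p\<in>B. dd p \<le> int n) \<and> T = 0)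
    \<or> (\<exists>v. cs f n = Run v \<and> invR v t B P (int T) \<and> M \<le> n)
    \<or> (cs f n = Done \<and> (\<exists>v te. invD v te B P))"
    using I g unfolding INV_def T_def t_def by simp
  have goal: "INV f M (Suc n) \<longleftrightarrow>
     ((cs f (Suc n) = Pre \<and> P \<union> mv = {} \<and> (\<forall>p\<in>nxt B (P \<union> mv). dd p \<le> t) \<and> T + x = 0)
   \<or> (\<exists>v. cs f (Suc n) = Run v \<and> invR v (t + 1) (nxt B (P \<union> mv)) (P \<union> mv) (int (T + x)) \<and> M \<le> Suc n)
   \<or> (cs f (Suc n) = Done \<and> (\<exists>v te. invD v te (nxt B (P \<union> mv)) (P \<union> mv))))"
    unfolding INV_def g' T' tS by (simp add: Let_def)
  consider (pre) "cs f n = Pre" "P = {}" "\<forall>p\<in>B. dd p \<le> int n" "T = 0"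
    | (run) v where "cs f n = Run v" "invR v t B P (int T)" "M \<le> n"
    | (dn) v te where "cs f n = Done" "invD v te B P" using I' by blast
  then show ?thesis
  proof cases
    case pre
    show ?thesis
    proof (cases "x = 0")
      case True
      have mv0: "mv = {}" unfolding mv_def using pre True by simp
      have cP: "cs f (Suc n) = Pre" using cs' pre True by simp
      have "\<forall>p\<in>nxt B (P \<union> mv). dd p \<le> t"
      proof
        fix w assume "w \<in> nxt B (P \<union> mv)"
        then consider "w \<in> B" | u where "u \<in> B" "grid_adj u w" unfolding nxt_def by blast
        then show "dd w \<le> t"
        proof cases
          case 1 then show ?thesis using pre t_def by auto
        next
          case 2 then show ?thesis using grid_adj_dd[of u w] pre t_def by fastforce
        qed
      qed
      then show ?thesis unfolding goal L using cP mv0 pre True by simp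
    next
      case xnz: False
      have Mx: "M \<le> Suc n" proof (rule ccontr)
        assume "\<not> M \<le> Suc n"
        then have "f (Suc n) = 0" using h0 by simp
        then show False using xnz unfolding x_def by simp
      qed
      define ve where "ve = v0 t"
      have V: "valid ve" using valid_v0[OF t1] unfolding ve_def .
      have Bv: "\<forall>p\<in>B. dd p \<le> t - 1 \<and> \<not> inE ve p"
        using pre inE_v0[of t] unfolding ve_def t_def by fastforce
      have Pv: "P = PV ve (t - 1)" using pre PV_v0 unfolding ve_def by simp
      show ?thesis
      proof (cases "card (Xs ve t) \<le> x")
        case True
        have st: "stepc (Suc n) (cs f n) x = (Done, Xs ve t)" using pre xnz True tS unfolding ve_def by simp
        have mvX: "mv = Xs ve t" unfolding mv_def st by simp
        have fX: "finite (Xs ve t)" using card_X0[OF t1] unfolding ve_def by simp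
        have "cs f (Suc n) = Done" using cs' st by simp
        then show ?thesis unfolding goal L using trans_end[OF V Bv Pv] fX True mvX by blast
      next
        case False
        define k where "k = int x - 1"
        have st: "stepc (Suc n) (cs f n) x = (Run (kstep t ve k), PV (kstep t ve k) t - PV ve (t - 1))"
          using pre xnz False tS unfolding ve_def k_def by simp
        have mvk: "mv = PV (kstep t ve k) t - PV ve (t - 1)" unfolding mv_def st by simp
        have cX: "int (card (Xs ve t)) \<le> 4*t" using card_X0[OF t1] unfolding ve_def by simp
        have s0: "shU t ve" "shU t (rfl ve)" using shU_v0[OF t1] unfolding ve_def by simp_all
        note tk = trans_k[OF V s0(1) s0(2) Bv Pv t1, of k "{(-t,0)}" "int x" "int T"]
        have tk': "finite mv \<and> int (card mv) \<le> int x \<and> mv \<inter> (B \<union> P) = {} \<and>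
              invR (kstep t ve k) (t+1) (nxt B (P \<union> mv)) (P \<union> mv) (int T + int x)"
        proof -
          have a1: "0 \<le> k" using xnz unfolding k_def by simp
          have a2: "k \<le> capU t ve + capU t (rfl ve)" using False cX capU_v0[of t] unfolding k_def ve_def by simp
          have a3: "capU t ve \<ge> 1" "capU t (rfl ve) \<ge> 1" using capU_v0[of t] t1 unfolding ve_def by auto
          have a4: "\<not> (dueU t ve \<and> dueU t (rfl ve))" "dueU t ve \<or> dueU t (rfl ve) \<longrightarrow> k \<ge> 1"
             "k = 0 \<longrightarrow> \<not> dueU (t+1) ve" using dueU_v0 unfolding ve_def by auto
          have a5: "{p. dd p = t \<and> (clEq t ve p \<or> clEq t (rfl ve) (rp p))} \<subseteq> {(-t,0)}"
            using clEq_v0 unfolding ve_def .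
          have a6: "k + int (card {(-t,0::int)}) \<le> int x" unfolding k_def by simp
          have a7: "Gv ve t + int T + (int x - k) \<le> 4*t" using Gv_v0[of t] pre unfolding ve_def k_def by simp
          show ?thesis using tk[OF a1 a2 a3 a4 a5 _ a6 a7] unfolding mvk by simp
        qed
        have "cs f (Suc n) = Run (kstep t ve k)" using cs' st by simp
        then show ?thesis unfolding goal L using tk' Mx by auto
      qed
    qed
  next
    case run
    have Mx: "M \<le> Suc n" using run by simp
    have x1: "x \<ge> 1" using hM Mx unfolding x_def by simp
    have iv: "valid v" "strU t v" "strU t (rfl v)" "\<not> (dueU t v \<and> dueU t (rfl v))" "P = PV v (t-1)"
      "\<forall>p\<in>B. dd p \<le> t - 1 \<and> \<not> inE v p" "Gv v t + int T \<le> 4*t"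
      using run(2) unfolding invR_def by auto
    have H: "validH v" "validH (rfl v)" using iv(1) unfolding valid_def by auto
    have cX: "finite (Xs v t) \<and> int (card (Xs v t)) \<le> Gv v t" by (rule card_X[OF iv(1-3) t1])
    show ?thesis
    proof (cases "card (Xs v t) \<le> x")
      case True
      have st: "stepc (Suc n) (cs f n) x = (Done, Xs v t)" using run True tS by simp
      have mvX: "mv = Xs v t" unfolding mv_def st by simp
      have "cs f (Suc n) = Done" using cs' st by simp
      then show ?thesis unfolding goal L using trans_end[OF iv(1) iv(6) iv(5)] cX True mvX by blast
    next
      case False
      define k where "k = int x"
      have st: "stepc (Suc n) (cs f n) x = (Run (kstep t v k), PV (kstep t v k) t - PV v (t - 1))"
        using run False tS unfolding k_def by simp
      have mvk: "mv = PV (kstep t v k) t - PV v (t - 1)" unfolding mv_def st by simp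
      have sh: "shU t v" "shU t (rfl v)" using iv(2,3) unfolding strU_def by auto
      note tk = trans_k[OF iv(1) sh iv(6) iv(5) t1, of k "{}" "int x" "int T"]
      have tk': "finite mv \<and> int (card mv) \<le> int x \<and> mv \<inter> (B \<union> P) = {} \<and>
            invR (kstep t v k) (t+1) (nxt B (P \<union> mv)) (P \<union> mv) (int T + int x)"
      proof -
        have a1: "0 \<le> k" unfolding k_def by simp
        have a2: "k \<le> capU t v + capU t (rfl v)" using False cX unfolding k_def Gv_def by simp
        have a3: "capU t v \<ge> 1" "capU t (rfl v) \<ge> 1" using capU_pos[OF H(1) iv(2)] capU_pos[OF H(2) iv(3)] by auto
        have a4: "\<not> (dueU t v \<and> dueU t (rfl v))" "dueU t v \<or> dueU t (rfl v) \<longrightarrow> k \<ge> 1"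
           "k = 0 \<longrightarrow> \<not> dueU (t+1) v" using iv(4) x1 unfolding k_def by auto
        have a5: "{p. dd p = t \<and> (clEq t v p \<or> clEq t (rfl v) (rp p))} \<subseteq> {}"
          by (rule clEq_run[OF iv(1-3)])
        have a6: "k + int (card ({}::(int\<times>int) set)) \<le> int x" unfolding k_def by simp
        have a7: "Gv v t + int T + (int x - k) \<le> 4*t" using iv(7) unfolding k_def by simp
        show ?thesis using tk[OF a1 a2 a3 a4 a5 _ a6 a7] unfolding mvk by simp
      qed
      have "cs f (Suc n) = Run (kstep t v k)" using cs' st by simp
      then show ?thesis unfolding goal L using tk' Mx by auto
    qed
  next
    case dn
    have st: "stepc (Suc n) (cs f n) x = (Done, {})" using dn by simp
    have mv0: "mv = {}" unfolding mv_def st by simp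
    have "cs f (Suc n) = Done" using cs' st by simp
    moreover have "invD v te (nxt B (P \<union> mv)) (P \<union> mv)" using trans_done[OF dn(2)] mv0 by simp
    ultimately have "cs f (Suc n) = Done \<and> (\<exists>v te. invD v te (nxt B (P \<union> mv)) (P \<union> mv))" by blast
    then show ?thesis unfolding goal L using mv0 by simp
  qed
qed


lemma INV_all:
  assumes hM: "\<forall>i\<ge>M. f i \<ge> 1" and h0: "\<forall>i. 1 \<le> i \<and> i < M \<longrightarrow> f i = 0"
  shows "INV f M n \<and> (\<forall>k\<in>{1..n}. legal_move (0,0) sig0 f k)"
proof (induction n)
  case 0 then show ?case using INV_0 by simp
next
  case (Suc n)
  have "INV f M (Suc n) \<and> legal_move (0,0) sig0 f (Suc n)" using INV_step[OF hM h0] Suc by blast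
  moreover have "\<forall>k\<in>{1..n}. legal_move (0,0) sig0 f k" using Suc by blast
  ultimately show ?case by (auto simp: le_Suc_eq)
qed

lemma done_by_N:
  assumes hM: "\<forall>i\<ge>M. f i \<ge> 1" and h0: "\<forall>i. 1 \<le> i \<and> i < M \<longrightarrow> f i = 0"
    and N: "N \<ge> 1" and S: "(\<Sum>i=1..N. f i) \<ge> 4 * N"
  shows "cs f N = Done"
proof -
  obtain m where m: "N = Suc m" using N by (cases N) auto
  have I: "INV f M m" using INV_all[OF hM h0] by blast
  obtain B P where g: "game_state (0,0) sig0 f m = (B,P)" by fastforce
  define T where "T = (\<Sum>i=1..m. f i)"
  have TN: "T + f N \<ge> 4 * N" using S unfolding T_def m by simp
  have cN: "cs f N = fst (stepc N (cs f m) (f N))" using cs_Suc m by simp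
  have t1: "int N \<ge> 1" using N by simp
  have I': "(cs f m = Pre \<and> T = 0)
    \<or> (\<exists>v. cs f m = Run v \<and> invR v (int m + 1) B P (int T))
    \<or> cs f m = Done"
    using I unfolding INV_def Let_def g fst_conv snd_conv T_def[symmetric] by blast
  have tN: "int N = int m + 1" using m by simp
  consider (pre) "cs f m = Pre" "T = 0" | (run) v where "cs f m = Run v" "invR v (int N) B P (int T)"
    | (dn) "cs f m = Done" using I' unfolding tN by blast
  then show ?thesis
  proof cases
    case pre
    then have fN: "f N \<ge> 4 * N" using TN by simp
    have "int (card (Xs (v0 (int N)) (int N))) \<le> 4 * int N" using card_X0[OF t1] by simp
    then have "card (Xs (v0 (int N)) (int N)) \<le> f N" using fN by linarith
    moreover have "f N \<noteq> 0" using fN N by simp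
    ultimately show ?thesis using cN pre by simp
  next
    case run
    have iv: "valid v" "strU (int N) v" "strU (int N) (rfl v)" "Gv v (int N) + int T \<le> 4 * int N"
      using run(2) unfolding invR_def by auto
    have "int (card (Xs v (int N))) \<le> Gv v (int N)" using card_X[OF iv(1-3) t1] by simp
    then have "card (Xs v (int N)) \<le> f N" using iv(4) TN by linarith
    then show ?thesis using cN run by simp
  next
    case dn then show ?thesis using cN by simp
  qed
qed

lemma finite_D: "finite {p::int \<times> int. dd p \<le> d}"
proof -
  have "{p::int \<times> int. dd p \<le> d} \<subseteq> {-d..d} \<times> {-d..d}"
  proof
    fix p :: "int \<times> int" assume "p \<in> {p. dd p \<le> d}"
    then show "p \<in> {-d..d} \<times> {-d..d}" by (cases p) auto
  qed
  then show ?thesis by (rule finite_subset) simp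
qed

lemma win0:
  assumes hM: "\<forall>i\<ge>M. f i \<ge> 1" and h0: "\<forall>i. 1 \<le> i \<and> i < M \<longrightarrow> f i = 0"
    and N: "N \<ge> 1" and S: "(\<Sum>i=1..N. f i) \<ge> 4 * N"
  shows "player1_wins (0,0) sig0 f"
proof -
  define B where "B n = fst (game_state (0,0) sig0 f n)" for n
  define P where "P n = snd (game_state (0,0) sig0 f n)" for n
  have dN: "cs f N = Done" by (rule done_by_N[OF hM h0 N S])
  have IN: "INV f M N" using INV_all[OF hM h0] by blast
  obtain v te where iD: "invD v te (B N) (P N)" using IN dN unfolding INV_def B_def P_def by (auto simp: Let_def)
  have stepD: "\<And>n. cs f n = Done \<Longrightarrow> cs f (Suc n) = Done \<and> B (Suc n) = nxt (B n) (P n) \<and> P (Suc n) = P n"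
  proof -
    fix n assume d: "cs f n = Done"
    have "sig0 (revealed f (Suc n)) = {}" using sig0_Suc[of f n] d by simp
    then show "cs f (Suc n) = Done \<and> B (Suc n) = nxt (B n) (P n) \<and> P (Suc n) = P n"
      using cs_Suc[of f n] d gs_Suc[of "(0,0)" sig0 f n] unfolding B_def P_def by simp
  qed
  have allD: "\<And>j. cs f (N + j) = Done \<and> invD v te (B (N + j)) (P (N + j))"
  proof -
    fix j show "cs f (N + j) = Done \<and> invD v te (B (N + j)) (P (N + j))"
    proof (induction j)
      case 0 then show ?case using dN iD by simp
    next
      case (Suc j)
      have "cs f (Suc (N + j)) = Done \<and> B (Suc (N + j)) = nxt (B (N + j)) (P (N + j)) \<and> P (Suc (N + j)) = P (N + j)"
        using stepD Suc by blast
      then show ?case using trans_done[of v te "B (N + j)" "P (N + j)" "P (N + j)"] Suc by simp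
    qed
  qed
  define D where "D = {p::int \<times> int. dd p \<le> te - 1}"
  have fD: "finite D" unfolding D_def by (rule finite_D)
  have BD: "\<And>j. B (N + j) \<subseteq> D" using allD unfolding invD_def D_def by blast
  have mono: "\<And>j. B (N + j) \<subseteq> B (N + Suc j)"
  proof -
    fix j
    have "B (Suc (N + j)) = nxt (B (N + j)) (P (N + j))" using stepD allD by blast
    then show "B (N + j) \<subseteq> B (N + Suc j)" unfolding nxt_def by auto
  qed
  have "\<exists>j. B (N + Suc j) = B (N + j)"
  proof (rule ccontr)
    assume ne: "\<not> (\<exists>j. B (N + Suc j) = B (N + j))"
    have "\<And>j. j \<le> card (B (N + j))"
    proof -
      fix j show "j \<le> card (B (N + j))"
      proof (induction j)
        case 0 then show ?case by simp
      next
        case (Suc j)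
        have ps: "B (N + j) \<subset> B (N + Suc j)" using mono[of j] ne by blast
        have "finite (B (N + Suc j))" using finite_subset[OF BD fD] .
        then have "card (B (N + j)) < card (B (N + Suc j))" by (rule psubset_card_mono[OF _ ps])
        then show ?case using Suc by simp
      qed
    qed
    then have "card D + 1 \<le> card (B (N + (card D + 1)))" by blast
    moreover have "card (B (N + (card D + 1))) \<le> card D" by (rule card_mono[OF fD BD])
    ultimately show False by simp
  qed
  then obtain j where j: "B (N + Suc j) = B (N + j)" by blast
  have L: "\<forall>k\<in>{1..N + Suc j}. legal_move (0,0) sig0 f k" using INV_all[OF hM h0] by blast
  show ?thesis unfolding player1_wins_def
  proof (intro exI[of _ "N + Suc j"] conjI)
    show "1 \<le> N + Suc j" by simp
    show "\<forall>k\<in>{1..N + Suc j}. legal_move (0,0) sig0 f k" using L .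
    show "fst (game_state (0,0) sig0 f (N + Suc j)) = fst (game_state (0,0) sig0 f (N + Suc j - 1))"
      using j unfolding B_def by simp
  qed
qed

section \<open>Translation\<close>

definition trv :: "vertex \<Rightarrow> vertex \<Rightarrow> vertex" where
"trv v p = (fst p + fst v, snd p + snd v)"

lemma inj_trv: "inj (trv v)"
  unfolding trv_def inj_def by auto

lemma trv_eq[simp]: "trv v a = trv v b \<longleftrightarrow> a = b"
  unfolding trv_def by (auto simp: prod_eq_iff)

lemma trv_surj: "w = trv v (fst w - fst v, snd w - snd v)"
  unfolding trv_def by simp

lemma adj_trv: "grid_adj (trv v a) (trv v b) = grid_adj a b"
  unfolding trv_def grid_adj_def by simp

lemma img_nxt: "trv v ` nxt B Q = nxt (trv v ` B) (trv v ` Q)"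
proof -
  have "trv v ` {w. w \<notin> Q \<and> (\<exists>u\<in>B. grid_adj u w)} = {w. w \<notin> trv v ` Q \<and> (\<exists>u\<in>trv v ` B. grid_adj u w)}"
  proof
    show "trv v ` {w. w \<notin> Q \<and> (\<exists>u\<in>B. grid_adj u w)} \<subseteq> {w. w \<notin> trv v ` Q \<and> (\<exists>u\<in>trv v ` B. grid_adj u w)}"
      by (auto simp: adj_trv)
  next
    show "{w. w \<notin> trv v ` Q \<and> (\<exists>u\<in>trv v ` B. grid_adj u w)} \<subseteq> trv v ` {w. w \<notin> Q \<and> (\<exists>u\<in>B. grid_adj u w)}"
    proof
      fix w assume w: "w \<in> {w. w \<notin> trv v ` Q \<and> (\<exists>u\<in>trv v ` B. grid_adj u w)}"
      define w0 where "w0 = (fst w - fst v, snd w - snd v)"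
      have we: "w = trv v w0" unfolding w0_def by (rule trv_surj)
      have "w0 \<notin> Q \<and> (\<exists>u\<in>B. grid_adj u w0)" using w we by (auto simp: adj_trv)
      then show "w \<in> trv v ` {w. w \<notin> Q \<and> (\<exists>u\<in>B. grid_adj u w)}" using we by blast
    qed
  qed
  then show ?thesis unfolding nxt_def by (simp add: image_Un)
qed

lemma gs_tr: "game_state v (\<lambda>xs. trv v ` s xs) f n =
   (trv v ` fst (game_state (0,0) s f n), trv v ` snd (game_state (0,0) s f n))"
proof (induction n)
  case 0
  have "trv v (0,0) = v" unfolding trv_def by simp
  then show ?case by simp
next
  case (Suc n)
  show ?case unfolding gs_Suc[of v] gs_Suc[of "(0,0)"] Suc by (simp add: img_nxt image_Un)
qed

lemma legal_tr: "legal_move v (\<lambda>xs. trv v ` s xs) f k = legal_move (0,0) s f k"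
proof -
  obtain B P where g: "game_state (0,0) s f (k - 1) = (B,P)" by fastforce
  have g': "game_state v (\<lambda>xs. trv v ` s xs) f (k - 1) = (trv v ` B, trv v ` P)" using gs_tr g by simp
  have i: "inj (trv v)" by (rule inj_trv)
  have c: "card (trv v ` s (revealed f k)) = card (s (revealed f k))" using card_image[OF inj_on_subset[OF i]] by blast
  have fi: "finite (trv v ` s (revealed f k)) = finite (s (revealed f k))" using finite_image_iff[OF inj_on_subset[OF i]] by blast
  have e0: "trv v ` s (revealed f k) \<inter> (trv v ` B \<union> trv v ` P) = trv v ` (s (revealed f k) \<inter> (B \<union> P))"
    by (simp add: image_Int[OF i] image_Un)
  have e: "(trv v ` s (revealed f k) \<inter> (trv v ` B \<union> trv v ` P) = {}) = (s (revealed f k) \<inter> (B \<union> P) = {})"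
    unfolding e0 by simp
  show ?thesis unfolding legal_move_def g g' using c fi e by (simp add: Let_def)
qed

lemma wins_tr: "player1_wins (0,0) s f \<Longrightarrow> player1_wins v (\<lambda>xs. trv v ` s xs) f"
proof -
  assume w: "player1_wins (0,0) s f"
  then obtain n where n: "n \<ge> 1" "\<forall>k\<in>{1..n}. legal_move (0,0) s f k"
    "fst (game_state (0,0) s f n) = fst (game_state (0,0) s f (n - 1))"
    unfolding player1_wins_def by blast
  show ?thesis unfolding player1_wins_def
    using n legal_tr[of v s f] gs_tr[of v s f n] gs_tr[of v s f "n - 1"] by auto
qed

theorem theorem2:
  shows "\<forall>v::vertex. \<exists>\<sigma>::strategy. \<forall>f::nat \<Rightarrow> nat.
     (\<exists>N\<ge>1. (\<Sum>i=1..N. f i) \<ge> 4 * N) \<and>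
     (\<exists>M\<ge>1. (\<forall>i\<ge>M. f i \<ge> 1) \<and> (\<forall>i. 1 \<le> i \<and> i < M \<longrightarrow> f i = 0))
     \<longrightarrow> player1_wins v \<sigma> f"
proof
  fix v :: vertex
  show "\<exists>\<sigma>::strategy. \<forall>f::nat \<Rightarrow> nat.
     (\<exists>N\<ge>1. (\<Sum>i=1..N. f i) \<ge> 4 * N) \<and>
     (\<exists>M\<ge>1. (\<forall>i\<ge>M. f i \<ge> 1) \<and> (\<forall>i. 1 \<le> i \<and> i < M \<longrightarrow> f i = 0))
     \<longrightarrow> player1_wins v \<sigma> f"
  proof (intro exI allI impI)
    fix f :: "nat \<Rightarrow> nat"
    assume h: "(\<exists>N\<ge>1. (\<Sum>i=1..N. f i) \<ge> 4 * N) \<and>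
     (\<exists>M\<ge>1. (\<forall>i\<ge>M. f i \<ge> 1) \<and> (\<forall>i. 1 \<le> i \<and> i < M \<longrightarrow> f i = 0))"
    then obtain N M where N: "N \<ge> 1" "(\<Sum>i=1..N. f i) \<ge> 4 * N"
      and M: "\<forall>i\<ge>M. f i \<ge> 1" "\<forall>i. 1 \<le> i \<and> i < M \<longrightarrow> f i = 0" by blast
    have "player1_wins (0,0) sig0 f" by (rule win0[OF M N])
    then show "player1_wins v (\<lambda>xs. trv v ` sig0 xs) f" by (rule wins_tr)
  qed
qed

end
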